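(* Suppose Assumptions A1 and A2 hold, the state space $\mathsf X$ is a finite set (with the discrete topology), and $\hat g$ and the numbers $\int\phi(x,y,\eta)\nu(d\eta)$ ($x,y\in\mathsf X$) are finite. Then Assumption A3 holds for every $p\ge1$, and $\mathcal L_\Phi^p=\mathcal L_\Phi$ for all $p\ge1$. In particular, statements (b)–(e) below hold for every $p\ge1$ if and only if $\mathcal L_\Phi<0$: (b) a Markov solution exists in $\mathcal H_p$; (c) a unique Markov solution exists in $\mathcal H_p$; (d) there is $h\in\mathcal H_p$ such that $T^nh$ converges in $L_p(\pi)$ to a limit in $\mathcal H_p$; (e) a unique Markov solution $h^*$ exists in $\mathcal H_p$ and $T^nh\to h^*$ for every $h\in\mathcal H_p$.
   Context: Standing setting: $\mathsf X$ and $\mathsf W$ are separable, completely metrizable topological spaces with their Borel $\sigma$-algebras. $\{X_t\}_{t\ge0}$ is a stationary Markov process on $\mathsf X$ with transition kernel $\Pi$ and stationary marginal $\pi$; $\Pi^n$ is the $n$-step kernel. $\{\eta_t\}$ is iid with law $\nu$, independent of $\{X_t\}$. $\phi,g:\mathsf X\times\mathsf X\times\mathsf W\to[0,\infty)$ are Borel and $\Phi_{t+1}=\phi(X_t,X_{t+1},\eta_{t+1})$, $G_{t+1}=g(X_t,X_{t+1},\eta_{t+1})$. $\mathbb E_x$ conditions on $X_0=x$; $\mathbb E$ is unconditional. $L_p(\pi)$ ($p\ge1$) is the Banach lattice of functions $h:\mathsf X\to\mathbb R$ with $\int|h|^pd\pi<\infty$ modulo $\pi$-null sets; $\mathcal H_p$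 its nonnegative elements. $Vh(x)=\int h(y)[\int\phi(x,y,\eta)\nu(d\eta)]\Pi(x,dy)$, $\hat g(x)=\int\int\phi g\,d\nu\,\Pi(x,dy)$, $Th=Vh+\hat g$. A Markov solution in $\mathcal H_p$ is $h\in\mathcal H_p$ with $h=Th$. A1: $\phi>0$ everywhere and $G_t>0$ with positive probability. A2: for every Borel $B$ with $\pi(B)>0$ and every $x$ there is $n$ with $\Pi^n(x,B)>0$. A3 (for a given $p\ge1$): $\hat g\in\mathcal H_p$ and $V$ maps $L_p(\pi)$ into itself and some power $V^i$ is compact on $L_p(\pi)$. $\mathcal L_\Phi^p:=\lim_{n}\frac{1}{np}\ln\int(\mathbb E_x\prod_{t=1}^n\Phi_t)^p\pi(dx)$ and $\mathcal L_\Phi:=\mathcal L_\Phi^1=\lim_n\frac1n\ln\mathbb E\prod_{t=1}^n\Phi_t$. *)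

theory Defs
  imports "HOL-Probability.Probability"
begin

text \<open>Finite state space: a type of class finite (discrete topology / sigma-algebra).
  The transition kernel is a stochastic matrix P, the stationary marginal a
  probability vector mu; the noise law is a measure nu on a Polish space.\<close>

definition piM :: "('x \<Rightarrow> real) \<Rightarrow> 'x measure" where
  "piM mu = point_measure UNIV (\<lambda>x. ennreal (mu x))"

primrec Ppow :: "('x::finite \<Rightarrow> 'x \<Rightarrow> real) \<Rightarrow> nat \<Rightarrow> 'x \<Rightarrow> 'x \<Rightarrow> real" where
  "Ppow P 0 x y = (if x = y then 1 else 0)"
| "Ppow P (Suc n) x y = (\<Sum>z\<in>UNIV. P x z * Ppow P n z y)"

definition Lp_mem :: "('x \<Rightarrow> real) \<Rightarrow> real \<Rightarrow> ('x \<Rightarrow> real) \<Rightarrow> bool" where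
  "Lp_mem mu p h \<longleftrightarrow> h \<in> borel_measurable (piM mu) \<and> integrable (piM mu) (\<lambda>x. \<bar>h x\<bar> powr p)"

definition Hp_mem :: "('x \<Rightarrow> real) \<Rightarrow> real \<Rightarrow> ('x \<Rightarrow> real) \<Rightarrow> bool" where
  "Hp_mem mu p h \<longleftrightarrow> Lp_mem mu p h \<and> (AE x in piM mu. h x \<ge> 0)"

definition Lp_norm :: "('x \<Rightarrow> real) \<Rightarrow> real \<Rightarrow> ('x \<Rightarrow> real) \<Rightarrow> real" where
  "Lp_norm mu p h = (\<integral>x. \<bar>h x\<bar> powr p \<partial>piM mu) powr (1 / p)"

definition ae_eq :: "('x \<Rightarrow> real) \<Rightarrow> ('x \<Rightarrow> real) \<Rightarrow> ('x \<Rightarrow> real) \<Rightarrow> bool" where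
  "ae_eq mu h h' \<longleftrightarrow> (AE x in piM mu. h x = h' x)"

definition Lp_tendsto :: "('x \<Rightarrow> real) \<Rightarrow> real \<Rightarrow> (nat \<Rightarrow> 'x \<Rightarrow> real) \<Rightarrow> ('x \<Rightarrow> real) \<Rightarrow> bool" where
  "Lp_tendsto mu p s h \<longleftrightarrow> ((\<lambda>n. Lp_norm mu p (\<lambda>x. s n x - h x)) \<longlonglongrightarrow> 0)"

text \<open>Compact operator on L_p(mu): every L_p-bounded sequence has a subsequence whose
  image is Cauchy (hence convergent, L_p being complete) in L_p(mu).\<close>
definition compact_op :: "('x \<Rightarrow> real) \<Rightarrow> real \<Rightarrow> (('x \<Rightarrow> real) \<Rightarrow> ('x \<Rightarrow> real)) \<Rightarrow> bool" where
  "compact_op mu p A \<longleftrightarrow>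
     (\<forall>s. (\<forall>n. Lp_mem mu p (s n)) \<and> bounded (range (\<lambda>n. Lp_norm mu p (s n))) \<longrightarrow>
        (\<exists>r::nat \<Rightarrow> nat. strict_mono r \<and>
           (\<forall>e>0. \<exists>N::nat. \<forall>m\<ge>N. \<forall>n\<ge>N. Lp_norm mu p (\<lambda>x. A (s (r m)) x - A (s (r n)) x) < e)))"

definition phibar :: "('x \<Rightarrow> 'x \<Rightarrow> 'w \<Rightarrow> real) \<Rightarrow> 'w measure \<Rightarrow> 'x \<Rightarrow> 'x \<Rightarrow> real" where
  "phibar phi nu x y = (\<integral>\<eta>. phi x y \<eta> \<partial>nu)"

definition Vop :: "('x::finite \<Rightarrow> 'x \<Rightarrow> real) \<Rightarrow> ('x \<Rightarrow> 'x \<Rightarrow> 'w \<Rightarrow> real) \<Rightarrow> 'w measure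
    \<Rightarrow> ('x \<Rightarrow> real) \<Rightarrow> 'x \<Rightarrow> real" where
  "Vop P phi nu h x = (\<Sum>y\<in>UNIV. h y * phibar phi nu x y * P x y)"

definition ghat :: "('x::finite \<Rightarrow> 'x \<Rightarrow> real) \<Rightarrow> ('x \<Rightarrow> 'x \<Rightarrow> 'w \<Rightarrow> real) \<Rightarrow> ('x \<Rightarrow> 'x \<Rightarrow> 'w \<Rightarrow> real)
    \<Rightarrow> 'w measure \<Rightarrow> 'x \<Rightarrow> real" where
  "ghat P phi g nu x = (\<Sum>y\<in>UNIV. (\<integral>\<eta>. phi x y \<eta> * g x y \<eta> \<partial>nu) * P x y)"

definition Top :: "('x::finite \<Rightarrow> 'x \<Rightarrow> real) \<Rightarrow> ('x \<Rightarrow> 'x \<Rightarrow> 'w \<Rightarrow> real) \<Rightarrow> ('x \<Rightarrow> 'x \<Rightarrow> 'w \<Rightarrow> real)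
    \<Rightarrow> 'w measure \<Rightarrow> ('x \<Rightarrow> real) \<Rightarrow> 'x \<Rightarrow> real" where
  "Top P phi g nu h x = Vop P phi nu h x + ghat P phi g nu x"

definition Markov_sol :: "('x \<Rightarrow> real) \<Rightarrow> real \<Rightarrow> (('x \<Rightarrow> real) \<Rightarrow> ('x \<Rightarrow> real)) \<Rightarrow> ('x \<Rightarrow> real) \<Rightarrow> bool" where
  "Markov_sol mu p T h \<longleftrightarrow> Hp_mem mu p h \<and> ae_eq mu h (T h)"

definition A1 :: "('x::finite \<Rightarrow> 'x \<Rightarrow> real) \<Rightarrow> ('x \<Rightarrow> real) \<Rightarrow> ('x \<Rightarrow> 'x \<Rightarrow> 'w \<Rightarrow> real)
    \<Rightarrow> ('x \<Rightarrow> 'x \<Rightarrow> 'w \<Rightarrow> real) \<Rightarrow> 'w measure \<Rightarrow> bool" where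
  "A1 P mu phi g nu \<longleftrightarrow> (\<forall>x y \<eta>. phi x y \<eta> > 0) \<and>
     (\<Sum>x\<in>UNIV. \<Sum>y\<in>UNIV. mu x * P x y * measure nu {\<eta> \<in> space nu. g x y \<eta> > 0}) > 0"

definition A2 :: "('x::finite \<Rightarrow> 'x \<Rightarrow> real) \<Rightarrow> ('x \<Rightarrow> real) \<Rightarrow> bool" where
  "A2 P mu \<longleftrightarrow> (\<forall>B. (\<Sum>x\<in>B. mu x) > 0 \<longrightarrow> (\<forall>x. \<exists>n. (\<Sum>y\<in>B. Ppow P n x y) > 0))"

definition A3 :: "('x \<Rightarrow> real) \<Rightarrow> real \<Rightarrow> (('x \<Rightarrow> real) \<Rightarrow> ('x \<Rightarrow> real)) \<Rightarrow> ('x \<Rightarrow> real) \<Rightarrow> bool" where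
  "A3 mu p V gh \<longleftrightarrow> Hp_mem mu p gh \<and> (\<forall>h. Lp_mem mu p h \<longrightarrow> Lp_mem mu p (V h))
     \<and> (\<exists>i\<ge>1. compact_op mu p (V ^^ i))"

text \<open>E_x prod_{t=1}^n Phi_t, computed with respect to the joint law of
  (X_1,...,X_n, eta_1,...,eta_n) given X_0 = x: the chain path has probability
  prod P(x_{t-1},x_t), and (eta_1..eta_n) is independent with law nu^n.\<close>
definition Ex_prod :: "('x::finite \<Rightarrow> 'x \<Rightarrow> real) \<Rightarrow> ('x \<Rightarrow> 'x \<Rightarrow> 'w \<Rightarrow> real) \<Rightarrow> 'w measure
    \<Rightarrow> 'x \<Rightarrow> nat \<Rightarrow> real" where
  "Ex_prod P phi nu x n =
     (\<Sum>xs\<in>PiE {1..n} (\<lambda>_. UNIV). let xs' = xs(0 := x) in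
        (\<Prod>t\<in>{1..n}. P (xs' (t - 1)) (xs' t)) *
        (\<integral>\<eta>s. (\<Prod>t\<in>{1..n}. phi (xs' (t - 1)) (xs' t) (\<eta>s t)) \<partial>PiM {1..n} (\<lambda>_. nu)))"

definition L_seq :: "('x::finite \<Rightarrow> 'x \<Rightarrow> real) \<Rightarrow> ('x \<Rightarrow> real) \<Rightarrow> ('x \<Rightarrow> 'x \<Rightarrow> 'w \<Rightarrow> real)
    \<Rightarrow> 'w measure \<Rightarrow> nat \<Rightarrow> real" where
  "L_seq P mu phi nu n = (1 / real n) * ln (\<Sum>x\<in>UNIV. mu x * Ex_prod P phi nu x n)"

definition Lp_seq :: "('x::finite \<Rightarrow> 'x \<Rightarrow> real) \<Rightarrow> ('x \<Rightarrow> real) \<Rightarrow> ('x \<Rightarrow> 'x \<Rightarrow> 'w \<Rightarrow> real)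
    \<Rightarrow> 'w measure \<Rightarrow> real \<Rightarrow> nat \<Rightarrow> real" where
  "Lp_seq P mu phi nu p n =
     (1 / (real n * p)) * ln (\<integral>x. (Ex_prod P phi nu x n) powr p \<partial>piM mu)"

end

theory Submission
  imports Defs "HOL-Analysis.Analysis" "HOL-Probability.Probability"
begin


lemma piM_sets: "sets (piM (mu::'x::finite\<Rightarrow>real)) = UNIV"
  unfolding piM_def by (simp add: sets_point_measure)

lemma piM_meas: "(h::'x::finite \<Rightarrow> real) \<in> borel_measurable (piM mu)"
  by (simp add: measurable_def piM_sets space_point_measure piM_def)

lemma piM_AE: "(AE x in piM mu. Q x) \<longleftrightarrow> (\<forall>x. mu x > 0 \<longrightarrow> Q x)"
  unfolding piM_def AE_point_measure by auto

lemma piM_integral: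
  assumes "\<forall>x. mu x \<ge> 0"
  shows "(\<integral>x. f x \<partial>piM (mu::'x::finite\<Rightarrow>real)) = (\<Sum>x\<in>UNIV. mu x * (f x::real))"
  unfolding piM_def using assms
  by (subst lebesgue_integral_point_measure_finite) auto

lemma piM_integrable:
  assumes "\<forall>x. mu x \<ge> 0"
  shows "integrable (piM (mu::'x::finite\<Rightarrow>real)) (f::'x\<Rightarrow>real)"
proof (rule integrableI_bounded)
  show "f \<in> borel_measurable (piM mu)" by (rule piM_meas)
  show "(\<integral>\<^sup>+ x. ennreal (norm (f x)) \<partial>piM mu) < \<infinity>"
    unfolding piM_def by (subst nn_integral_point_measure_finite) (auto simp: ennreal_mult_less_top)
qed


lemma perron_brouwer:
  fixes A :: "'x::finite \<Rightarrow> 'x \<Rightarrow> real" and S :: "'x set"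
  assumes Anonneg: "\<forall>x y. A x y \<ge> 0" and Sne: "S \<noteq> {}"
    and col: "\<forall>y\<in>S. \<exists>x\<in>S. A x y > 0"
  shows "\<exists>v r. r > 0 \<and> (\<forall>x. v x \<ge> 0) \<and> (\<forall>x. x \<notin> S \<longrightarrow> v x = 0) \<and> sum v UNIV = 1 \<and>
     (\<forall>x\<in>S. (\<Sum>y\<in>S. A x y * v y) = r * v x)"
proof -
  define K where "K = {u::real^'x. (\<forall>i. u$i \<ge> 0) \<and> (\<forall>i. i \<notin> S \<longrightarrow> u$i = 0) \<and> sum (\<lambda>i. u$i) UNIV = 1}"
  define D where "D u = (\<Sum>x\<in>S. \<Sum>y\<in>S. A x y * u$y)" for u :: "real^'x"
  define F where "F u = (\<chi> x. if x \<in> S then (\<Sum>y\<in>S. A x y * u$y) / D u else 0)" for u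
  have Dpos: "D u > 0" if "u \<in> K" for u
  proof -
    from that have u0: "\<forall>i. u$i \<ge> 0" and uS: "\<forall>i. i \<notin> S \<longrightarrow> u$i = 0" and us: "sum (\<lambda>i. u$i) UNIV = 1"
      by (auto simp: K_def)
    have "\<exists>y\<in>S. u$y > 0"
    proof (rule ccontr)
      assume "\<not> ?thesis"
      then have "\<forall>i. u$i = 0" using u0 uS by (metis order_less_le)
      then show False using us by simp
    qed
    then obtain y where y: "y \<in> S" "u$y > 0" by blast
    then obtain x where x: "x \<in> S" "A x y > 0" using col by blast
    have "0 < A x y * u$y" using x y by simp
    also have "\<dots> \<le> (\<Sum>y\<in>S. A x y * u$y)"
      by (rule member_le_sum) (use y u0 Anonneg in auto)
    also have "\<dots> \<le> D u" unfolding D_def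
      by (rule member_le_sum[where f="\<lambda>x. \<Sum>y\<in>S. A x y * u$y"]) (use x u0 Anonneg in \<open>auto intro!: sum_nonneg\<close>)
    finally show ?thesis .
  qed
  have Kne: "K \<noteq> {}"
  proof -
    obtain s where s: "s \<in> S" using Sne by blast
    have "(\<chi> i. if i = s then (1::real) else 0) \<in> K" using s by (auto simp: K_def)
    then show ?thesis by blast
  qed
  have Kconv: "convex K"
    unfolding K_def convex_def
    by (auto simp: sum.distrib sum_distrib_left[symmetric] add_nonneg_nonneg)
  have Kcl: "closed K"
  proof -
    have "K = (\<Inter>i. {u. u$i \<ge> 0}) \<inter> (\<Inter>i\<in>-S. {u. u$i = 0}) \<inter> {u. sum (\<lambda>i. u$i) UNIV = 1}"
      by (auto simp: K_def)
    moreover have "closed {u::real^'x. sum (\<lambda>i. u$i) UNIV = 1}"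
      by (intro closed_Collect_eq continuous_intros)
    ultimately show ?thesis
      by (auto intro!: closed_Int closed_INT closed_Collect_le closed_Collect_eq continuous_intros)
  qed
  have Kbd: "bounded K"
  proof -
    have "K \<subseteq> cball 0 1"
    proof
      fix u assume "u \<in> K"
      then have "norm u \<le> sum (\<lambda>i. \<bar>u$i\<bar>) UNIV" "sum (\<lambda>i. \<bar>u$i\<bar>) UNIV = 1"
        using norm_le_l1_cart[of u] by (auto simp: K_def)
      then show "u \<in> cball 0 1" by simp
    qed
    then show ?thesis using bounded_cball bounded_subset by blast
  qed
  have Kcomp: "compact K" using Kcl Kbd by (simp add: compact_eq_bounded_closed)
  have Fcont: "continuous_on K F"
    unfolding F_def
  proof (intro continuous_on_vec_lambda)
    fix x
    show "continuous_on K (\<lambda>u. if x \<in> S then (\<Sum>y\<in>S. A x y * u$y) / D u else 0)"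
    proof (cases "x \<in> S")
      case True
      then show ?thesis unfolding D_def
        by (simp, intro continuous_intros) (use Dpos in \<open>fastforce simp: D_def\<close>)
    qed simp
  qed
  have FK: "F \<in> K \<rightarrow> K"
  proof
    fix u assume u: "u \<in> K"
    have Dp: "D u > 0" using Dpos u by blast
    have u0: "\<forall>i. u$i \<ge> 0" using u by (auto simp: K_def)
    have "sum (\<lambda>i. F u $ i) UNIV = (\<Sum>x\<in>S. (\<Sum>y\<in>S. A x y * u$y) / D u)"
      unfolding F_def by (simp add: sum.If_cases)
    also have "\<dots> = 1" using Dp by (simp add: sum_divide_distrib[symmetric] D_def)
    finally show "F u \<in> K" using Dp u0 Anonneg
      by (auto simp: K_def F_def intro!: divide_nonneg_pos sum_nonneg mult_nonneg_nonneg)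
  qed
  obtain u where u: "u \<in> K" "F u = u" using brouwer[OF Kcomp Kconv Kne Fcont FK] by blast
  define r where "r = D u"
  have rp: "r > 0" using Dpos u by (simp add: r_def)
  show ?thesis
  proof (intro exI conjI)
    show "r > 0" by (rule rp)
    show "\<forall>x. u$x \<ge> 0" "\<forall>x. x \<notin> S \<longrightarrow> u$x = 0" "sum (\<lambda>x. u$x) UNIV = 1" using u by (auto simp: K_def)
    show "\<forall>x\<in>S. (\<Sum>y\<in>S. A x y * u$y) = r * u$x"
    proof
      fix x assume x: "x \<in> S"
      have "u$x = F u $ x" using u by simp
      also have "\<dots> = (\<Sum>y\<in>S. A x y * u$y) / r" using x by (simp add: F_def r_def)
      finally show "(\<Sum>y\<in>S. A x y * u$y) = r * u$x" using rp by (simp add: field_simps)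
    qed
  qed
qed


lemma path_sum:
  fixes W :: "'x::finite \<Rightarrow> 'x \<Rightarrow> real"
  shows "(\<Sum>xs\<in>PiE {1..n} (\<lambda>_. UNIV). (\<Prod>t\<in>{1..n}. W ((xs(0:=x)) (t-1)) ((xs(0:=x)) t)) * f ((xs(0:=x)) n))
     = ((\<lambda>h z. \<Sum>y\<in>UNIV. W z y * h y)^^n) f x"
proof (induction n arbitrary: f)
  case 0
  then show ?case by simp
next
  case (Suc n)
  define Mv where "Mv = (\<lambda>h z. \<Sum>y\<in>UNIV. W z y * h y)"
  define G where "G g = (\<Prod>t\<in>{1..n}. W ((g(0:=x)) (t-1)) ((g(0:=x)) t))" for g :: "nat \<Rightarrow> 'x"
  have set: "PiE {1..Suc n} (\<lambda>_. UNIV::'x set) = (\<lambda>(y, g). g(Suc n := y)) ` (UNIV \<times> PiE {1..n} (\<lambda>_. UNIV))"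
    using PiE_insert_eq[of "Suc n" "{1..n}" "\<lambda>_. UNIV::'x set"] by (simp add: atLeastAtMostSuc_conv)
  have inj: "inj_on (\<lambda>(y, g). g(Suc n := y)) (UNIV \<times> PiE {1..n} (\<lambda>_. UNIV::'x set))"
    using inj_combinator[of "Suc n" "{1..n}" "\<lambda>_. UNIV::'x set"] by simp
  have termeq: "(\<Prod>t\<in>{1..Suc n}. W (((g(Suc n := y))(0:=x)) (t-1)) (((g(Suc n := y))(0:=x)) t)) * f (((g(Suc n := y))(0:=x)) (Suc n))
      = G g * (W ((g(0:=x)) n) y * f y)" for g y
  proof -
    have "(\<Prod>t\<in>{1..Suc n}. W (((g(Suc n := y))(0:=x)) (t-1)) (((g(Suc n := y))(0:=x)) t))
        = (\<Prod>t\<in>{1..n}. W (((g(Suc n := y))(0:=x)) (t-1)) (((g(Suc n := y))(0:=x)) t)) * W ((g(0:=x)) n) y"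
      by (simp add: atLeastAtMostSuc_conv mult.commute)
    also have "(\<Prod>t\<in>{1..n}. W (((g(Suc n := y))(0:=x)) (t-1)) (((g(Suc n := y))(0:=x)) t)) = G g"
      unfolding G_def by (intro prod.cong) auto
    finally have e1: "(\<Prod>t\<in>{1..Suc n}. W (((g(Suc n := y))(0:=x)) (t-1)) (((g(Suc n := y))(0:=x)) t)) = G g * W ((g(0:=x)) n) y" .
    have e2: "((g(Suc n := y))(0:=x)) (Suc n) = y" by simp
    show ?thesis by (simp only: e1 e2 mult.assoc)
  qed
  have "(\<Sum>xs\<in>PiE {1..Suc n} (\<lambda>_. UNIV). (\<Prod>t\<in>{1..Suc n}. W ((xs(0:=x)) (t-1)) ((xs(0:=x)) t)) * f ((xs(0:=x)) (Suc n)))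
      = (\<Sum>(y,g)\<in>UNIV \<times> PiE {1..n} (\<lambda>_. UNIV). G g * (W ((g(0:=x)) n) y * f y))"
    unfolding set
  proof (subst sum.reindex[OF inj], rule sum.cong[OF refl])
    fix p assume "p \<in> (UNIV::'x set) \<times> PiE {1..n} (\<lambda>_. UNIV::'x set)"
    obtain y g where p: "p = (y, g)" by (cases p)
    show "((\<lambda>xs. (\<Prod>t\<in>{1..Suc n}. W ((xs(0:=x)) (t-1)) ((xs(0:=x)) t)) * f ((xs(0:=x)) (Suc n))) \<circ> (\<lambda>(y, g). g(Suc n := y))) p
      = (case p of (y, g) \<Rightarrow> G g * (W ((g(0:=x)) n) y * f y))"
      unfolding p comp_def case_prod_conv by (rule termeq)
  qed
  also have "\<dots> = (\<Sum>y\<in>UNIV. \<Sum>g\<in>PiE {1..n} (\<lambda>_. UNIV). G g * (W ((g(0:=x)) n) y * f y))"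
    by (rule sum.cartesian_product[symmetric])
  also have "\<dots> = (\<Sum>g\<in>PiE {1..n} (\<lambda>_. UNIV). G g * Mv f ((g(0:=x)) n))"
    by (subst sum.swap) (simp add: Mv_def sum_distrib_left)
  also have "\<dots> = (Mv^^n) (Mv f) x" unfolding G_def Mv_def by (rule Suc.IH)
  also have "\<dots> = (Mv^^Suc n) f x" by (simp add: funpow_Suc_right del: funpow.simps)
  finally show ?case by (simp add: Mv_def)
qed


lemma Ex_prod_eq:
  fixes P :: "'x::finite \<Rightarrow> 'x \<Rightarrow> real"
  assumes nu_prob: "prob_space nu" and phibar_fin: "\<forall>x y. integrable nu (phi x y)"
  shows "Ex_prod P phi nu x n = ((\<lambda>h z. \<Sum>y\<in>UNIV. (P z y * phibar phi nu z y) * h y)^^n) (\<lambda>_. 1) x"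
proof -
  interpret product_sigma_finite "\<lambda>_::nat. nu"
    unfolding product_sigma_finite_def using nu_prob
    by (simp add: prob_space_imp_sigma_finite)
  have "Ex_prod P phi nu x n = (\<Sum>xs\<in>PiE {1..n} (\<lambda>_. UNIV).
      (\<Prod>t\<in>{1..n}. P ((xs(0:=x)) (t-1)) ((xs(0:=x)) t) * phibar phi nu ((xs(0:=x)) (t-1)) ((xs(0:=x)) t)) * (\<lambda>_. 1) ((xs(0:=x)) n))"
    unfolding Ex_prod_def Let_def
  proof (rule sum.cong[OF refl])
    fix xs :: "nat \<Rightarrow> 'x"
    have "(\<integral>\<eta>s. (\<Prod>t\<in>{1..n}. phi ((xs(0:=x)) (t-1)) ((xs(0:=x)) t) (\<eta>s t)) \<partial>PiM {1..n} (\<lambda>_. nu))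
        = (\<Prod>t\<in>{1..n}. integral\<^sup>L nu (phi ((xs(0:=x)) (t-1)) ((xs(0:=x)) t)))"
      by (rule product_integral_prod) (auto simp: phibar_fin)
    then show "(\<Prod>t\<in>{1..n}. P ((xs(0:=x)) (t-1)) ((xs(0:=x)) t)) *
        (\<integral>\<eta>s. (\<Prod>t\<in>{1..n}. phi ((xs(0:=x)) (t-1)) ((xs(0:=x)) t) (\<eta>s t)) \<partial>PiM {1..n} (\<lambda>_. nu))
      = (\<Prod>t\<in>{1..n}. P ((xs(0:=x)) (t-1)) ((xs(0:=x)) t) * phibar phi nu ((xs(0:=x)) (t-1)) ((xs(0:=x)) t)) * (\<lambda>_. 1) ((xs(0:=x)) n)"
      by (simp add: prod.distrib phibar_def)
  qed
  also have "\<dots> = ((\<lambda>h z. \<Sum>y\<in>UNIV. (P z y * phibar phi nu z y) * h y)^^n) (\<lambda>_. 1) x"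
    by (rule path_sum)
  finally show ?thesis .
qed


locale finsys =
  fixes M :: "'x::finite \<Rightarrow> 'x \<Rightarrow> real" and b :: "'x \<Rightarrow> real" and mu :: "'x \<Rightarrow> real"
  assumes M_nonneg: "\<And>x y. M x y \<ge> 0"
    and b_nonneg: "\<And>x. b x \<ge> 0"
    and mu_nonneg: "\<And>x. mu x \<ge> 0"
    and S_ne: "\<exists>x. mu x > 0"
    and closedS: "\<And>x y. mu x > 0 \<Longrightarrow> M x y > 0 \<Longrightarrow> mu y > 0"
    and colS: "\<And>y. mu y > 0 \<Longrightarrow> \<exists>x. mu x > 0 \<and> M x y > 0"
    and rowS: "\<And>x. mu x > 0 \<Longrightarrow> \<exists>y. mu y > 0 \<and> M x y > 0"
    and irr: "\<And>x y. mu x > 0 \<Longrightarrow> mu y > 0 \<Longrightarrow> (x, y) \<in> {(x,y). mu x > 0 \<and> mu y > 0 \<and> M x y > 0}\<^sup>*"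
    and bpos: "\<exists>x. mu x > 0 \<and> b x > 0"
    and mu_sum: "sum mu UNIV = 1"
begin

definition "S = {x. mu x > 0}"
definition "R = {(x,y). mu x > 0 \<and> mu y > 0 \<and> M x y > 0}"
definition Mv :: "('x \<Rightarrow> real) \<Rightarrow> 'x \<Rightarrow> real" where "Mv f x = (\<Sum>y\<in>UNIV. M x y * f y)"
definition T :: "('x \<Rightarrow> real) \<Rightarrow> 'x \<Rightarrow> real" where "T f x = Mv f x + b x"

lemma S_ne': "S \<noteq> {}" using S_ne by (auto simp: S_def)

lemma M_zero: "x \<in> S \<Longrightarrow> y \<notin> S \<Longrightarrow> M x y = 0"
  using closedS M_nonneg[of x y] by (force simp: S_def)

lemma Mv_S: "x \<in> S \<Longrightarrow> Mv f x = (\<Sum>y\<in>S. M x y * f y)"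
  unfolding Mv_def by (rule sum.mono_neutral_right) (auto simp: M_zero)

lemma Mv_local: "x \<in> S \<Longrightarrow> (\<forall>y\<in>S. f y = g y) \<Longrightarrow> Mv f x = Mv g x"
  by (simp add: Mv_S)

lemma Mvn_local: "x \<in> S \<Longrightarrow> (\<forall>y\<in>S. f y = g y) \<Longrightarrow> (Mv^^n) f x = (Mv^^n) g x"
proof (induction n arbitrary: x)
  case (Suc n)
  then show ?case by (simp add: Mv_local)
qed simp

lemma Mv_mono: "x \<in> S \<Longrightarrow> (\<forall>y\<in>S. f y \<le> g y) \<Longrightarrow> Mv f x \<le> Mv g x"
  by (simp add: Mv_S sum_mono mult_left_mono M_nonneg)

lemma Mvn_mono: "x \<in> S \<Longrightarrow> (\<forall>y\<in>S. f y \<le> g y) \<Longrightarrow> (Mv^^n) f x \<le> (Mv^^n) g x"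
proof (induction n arbitrary: x)
  case (Suc n)
  then show ?case by (simp add: Mv_mono)
qed simp

lemma Mv_diff: "Mv (\<lambda>y. f y - g y) = (\<lambda>x. Mv f x - Mv g x)"
  by (auto simp: Mv_def algebra_simps sum_subtractf)

lemma Mvn_diff: "(Mv^^n) (\<lambda>y. f y - g y) = (\<lambda>x. (Mv^^n) f x - (Mv^^n) g x)"
  by (induction n) (auto simp: Mv_diff)

lemma Tn_diff: "(\<lambda>x. (T^^n) f x - (T^^n) g x) = (Mv^^n) (\<lambda>y. f y - g y)"
proof (induction n)
  case (Suc n)
  have "(\<lambda>x. (T^^Suc n) f x - (T^^Suc n) g x) = Mv (\<lambda>x. (T^^n) f x - (T^^n) g x)"
    by (simp add: T_def Mv_diff)
  also have "\<dots> = (Mv^^Suc n) (\<lambda>y. f y - g y)" by (simp add: Suc)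
  finally show ?case .
qed simp

lemma Tn_local: "x \<in> S \<Longrightarrow> (\<forall>y\<in>S. f y = g y) \<Longrightarrow> (T^^n) f x = (T^^n) g x"
proof (induction n arbitrary: x)
  case (Suc n)
  then show ?case by (simp add: T_def Mv_local)
qed simp

lemma perron_pos:
  fixes A :: "'x \<Rightarrow> 'x \<Rightarrow> real"
  assumes A: "\<And>x y. A x y \<ge> 0" and v0: "\<forall>x. v x \<ge> 0" and vS: "\<forall>x. x \<notin> S \<longrightarrow> v x = 0"
    and vs: "sum v UNIV = 1" and rp: "r > 0"
    and eig: "\<forall>x\<in>S. (\<Sum>y\<in>S. A x y * v y) = r * v x"
    and irrA: "\<And>x y. x \<in> S \<Longrightarrow> y \<in> S \<Longrightarrow> (x, y) \<in> {(x,y). x \<in> S \<and> y \<in> S \<and> A x y > 0}\<^sup>*"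
    and x: "x \<in> S"
  shows "v x > 0"
proof -
  have "\<exists>z\<in>S. v z > 0"
  proof (rule ccontr)
    assume "\<not> ?thesis"
    then have "\<forall>i. v i = 0" using v0 vS by (metis order_less_le)
    then show False using vs by simp
  qed
  then obtain z where z: "z \<in> S" "v z > 0" by blast
  have "(x, z) \<in> {(x,y). x \<in> S \<and> y \<in> S \<and> A x y > 0}\<^sup>*" using irrA x z by blast
  then show ?thesis
  proof (induction rule: converse_rtrancl_induct)
    case base
    then show ?case using z by simp
  next
    case (step y y')
    then have y: "y \<in> S" "y' \<in> S" "A y y' > 0" by auto
    have "0 < A y y' * v y'" using y step by simp
    also have "\<dots> \<le> (\<Sum>u\<in>S. A y u * v u)"
      by (rule member_le_sum) (use y A v0 in auto)
    also have "\<dots> = r * v y" using eig y by blast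
    finally show ?case using rp by (simp add: zero_less_mult_iff)
  qed
qed

definition "rv_prop v r \<longleftrightarrow> r > 0 \<and> (\<forall>x. v x \<ge> 0) \<and> (\<forall>x. x \<notin> S \<longrightarrow> v x = 0) \<and> sum v UNIV = 1 \<and>
     (\<forall>x\<in>S. (\<Sum>y\<in>S. M x y * v y) = r * v x)"

lemma rv_ex: "\<exists>v r. rv_prop v r"
proof -
  have col: "\<forall>y\<in>S. \<exists>x\<in>S. M x y > 0" using colS by (auto simp: S_def)
  have A: "\<forall>x y. M x y \<ge> 0" using M_nonneg by blast
  show ?thesis unfolding rv_prop_def by (rule perron_brouwer[OF A S_ne' col])
qed

lemma irrS: "x \<in> S \<Longrightarrow> y \<in> S \<Longrightarrow> (x, y) \<in> {(x,y). x \<in> S \<and> y \<in> S \<and> M x y > 0}\<^sup>*"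
proof -
  have e: "{(x,y). x \<in> S \<and> y \<in> S \<and> M x y > 0} = {(x,y). mu x > 0 \<and> mu y > 0 \<and> M x y > 0}"
    by (auto simp: S_def)
  assume "x \<in> S" "y \<in> S"
  then show ?thesis unfolding e using irr by (simp add: S_def)
qed

definition "rr = (SOME r. \<exists>v. rv_prop v r)"
definition "vv = (SOME v. rv_prop v rr)"

lemma rv: "rv_prop vv rr"
proof -
  have ex: "\<exists>r v. rv_prop v r" using rv_ex by blast
  have "\<exists>v. rv_prop v rr" unfolding rr_def using ex by (rule someI_ex)
  then show ?thesis unfolding vv_def by (rule someI_ex)
qed

lemma rr_pos: "rr > 0" using rv by (simp add: rv_prop_def)
lemma vv_nonneg: "vv x \<ge> 0" using rv by (simp add: rv_prop_def)
lemma vv_pos: "x \<in> S \<Longrightarrow> vv x > 0"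
proof -
  assume x: "x \<in> S"
  have r: "rr > 0" "\<forall>x. vv x \<ge> 0" "\<forall>x. x \<notin> S \<longrightarrow> vv x = 0" "sum vv UNIV = 1"
     "\<forall>x\<in>S. (\<Sum>y\<in>S. M x y * vv y) = rr * vv x" using rv by (auto simp: rv_prop_def)
  show ?thesis by (rule perron_pos[OF M_nonneg r(2) r(3) r(4) r(1) r(5) irrS x])
qed
lemma vv_eig: "x \<in> S \<Longrightarrow> Mv vv x = rr * vv x"
  using rv by (simp add: rv_prop_def Mv_S)

lemma Mvn_eig: "x \<in> S \<Longrightarrow> (Mv^^n) (\<lambda>y. c * vv y) x = c * rr^n * vv x"
proof (induction n arbitrary: x)
  case (Suc n)
  have "(Mv^^Suc n) (\<lambda>y. c * vv y) x = Mv ((Mv^^n) (\<lambda>y. c * vv y)) x" by simp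
  also have "\<dots> = Mv (\<lambda>y. (c * rr^n) * vv y) x"
    using Suc by (intro Mv_local) auto
  also have "\<dots> = (c * rr^n) * Mv vv x" by (simp add: Mv_def sum_distrib_left algebra_simps)
  also have "\<dots> = c * rr^Suc n * vv x" using vv_eig[OF Suc.prems] by simp
  finally show ?case .
qed simp

definition "lw_prop w r \<longleftrightarrow> r > 0 \<and> (\<forall>x. w x \<ge> 0) \<and> (\<forall>x. x \<notin> S \<longrightarrow> w x = 0) \<and> sum w UNIV = 1 \<and>
     (\<forall>x\<in>S. (\<Sum>y\<in>S. M y x * w y) = r * w x)"

lemma lw_ex: "\<exists>w r. lw_prop w r"
proof -
  have col: "\<forall>y\<in>S. \<exists>x\<in>S. M y x > 0" using rowS by (auto simp: S_def)
  have A: "\<forall>x y. M y x \<ge> 0" using M_nonneg by blast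
  show ?thesis unfolding lw_prop_def by (rule perron_brouwer[where A="\<lambda>x y. M y x", OF A S_ne' col])
qed

definition "ww = (SOME w. \<exists>r. lw_prop w r)"

lemma irr_conv: "x \<in> S \<Longrightarrow> y \<in> S \<Longrightarrow> (x, y) \<in> {(x,y). x \<in> S \<and> y \<in> S \<and> M y x > 0}\<^sup>*"
proof -
  assume "x \<in> S" "y \<in> S"
  then have "(y, x) \<in> R\<^sup>*" using irr by (simp add: S_def R_def)
  then have "(x, y) \<in> (R\<inverse>)\<^sup>*" by (simp add: rtrancl_converse)
  moreover have "R\<inverse> = {(x,y). x \<in> S \<and> y \<in> S \<and> M y x > 0}" by (auto simp: R_def S_def)
  ultimately show ?thesis by simp
qed

lemma ww_prop: "\<exists>r. lw_prop ww r"
  unfolding ww_def using lw_ex by (rule someI_ex)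

lemma ww_nonneg: "ww x \<ge> 0" using ww_prop by (auto simp: lw_prop_def)
lemma ww_pos: "x \<in> S \<Longrightarrow> ww x > 0"
proof -
  assume x: "x \<in> S"
  obtain r where "lw_prop ww r" using ww_prop by blast
  then have r: "r > 0" "\<forall>x. ww x \<ge> 0" "\<forall>x. x \<notin> S \<longrightarrow> ww x = 0" "sum ww UNIV = 1"
     "\<forall>x\<in>S. (\<Sum>y\<in>S. M y x * ww y) = r * ww x" by (auto simp: lw_prop_def)
  show ?thesis by (rule perron_pos[where A="\<lambda>x y. M y x", OF M_nonneg r(2) r(3) r(4) r(1) r(5) irr_conv x])
qed

lemma ww_eig: "y \<in> S \<Longrightarrow> (\<Sum>x\<in>S. ww x * M x y) = rr * ww y"
proof -
  obtain r where lw: "lw_prop ww r" using ww_prop by blast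
  have eig: "\<forall>x\<in>S. (\<Sum>y\<in>S. M y x * ww y) = r * ww x" using lw by (simp add: lw_prop_def)
  have "(\<Sum>x\<in>S. ww x * (\<Sum>y\<in>S. M x y * vv y)) = (\<Sum>x\<in>S. \<Sum>y\<in>S. ww x * M x y * vv y)"
    by (simp add: sum_distrib_left mult.assoc)
  also have "\<dots> = (\<Sum>y\<in>S. \<Sum>x\<in>S. ww x * M x y * vv y)" by (rule sum.swap)
  also have "\<dots> = (\<Sum>y\<in>S. vv y * (\<Sum>x\<in>S. M x y * ww x))"
    by (simp add: sum_distrib_left algebra_simps)
  also have "\<dots> = (\<Sum>y\<in>S. vv y * (r * ww y))" using eig by simp
  finally have e1: "(\<Sum>x\<in>S. ww x * (\<Sum>y\<in>S. M x y * vv y)) = r * (\<Sum>y\<in>S. ww y * vv y)"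
    by (simp add: sum_distrib_left algebra_simps)
  have "(\<Sum>x\<in>S. ww x * (\<Sum>y\<in>S. M x y * vv y)) = (\<Sum>x\<in>S. ww x * (rr * vv x))"
    using rv by (simp add: rv_prop_def)
  then have e2: "(\<Sum>x\<in>S. ww x * (\<Sum>y\<in>S. M x y * vv y)) = rr * (\<Sum>y\<in>S. ww y * vv y)"
    by (simp add: sum_distrib_left algebra_simps)
  have pos: "(\<Sum>y\<in>S. ww y * vv y) > 0"
    using S_ne' by (intro sum_pos) (auto simp: ww_pos vv_pos)
  have "r = rr" using e1 e2 pos by simp
  moreover assume "y \<in> S"
  ultimately show ?thesis using eig by (simp add: mult.commute)
qed

end

context finsys begin

lemma Lp_mem_all: "Lp_mem mu p h"
  unfolding Lp_mem_def by (simp add: piM_meas piM_integrable mu_nonneg)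

lemma Hp_iff: "Hp_mem mu p h \<longleftrightarrow> (\<forall>x\<in>S. h x \<ge> 0)"
  unfolding Hp_mem_def by (simp add: Lp_mem_all piM_AE S_def)

lemma ae_eq_iff: "ae_eq mu h h' \<longleftrightarrow> (\<forall>x\<in>S. h x = h' x)"
  unfolding ae_eq_def by (auto simp: piM_AE S_def)

lemma mu_zero: "\<not> mu x > 0 \<Longrightarrow> mu x = 0" using mu_nonneg[of x] by simp

lemma sum_S: "(\<Sum>x\<in>UNIV. mu x * f x) = (\<Sum>x\<in>S. mu x * f x)"
proof (rule sum.mono_neutral_right)
  show "\<forall>i\<in>UNIV - S. mu i * f i = 0"
  proof
    fix i assume "i \<in> UNIV - S"
    then have "mu i = 0" by (intro mu_zero) (simp add: S_def)
    then show "mu i * f i = 0" by simp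
  qed
qed auto

lemma mu_sum_S: "(\<Sum>x\<in>S. mu x) = 1"
  using sum_S[of "\<lambda>_. 1"] mu_sum by simp

lemma Lp_norm_eq: "Lp_norm mu p h = (\<Sum>x\<in>S. mu x * \<bar>h x\<bar> powr p) powr (1/p)"
  unfolding Lp_norm_def by (simp add: piM_integral mu_nonneg sum_S)

lemma Lp_norm_small:
  assumes p: "p > 0" and e: "e > 0" and d: "\<forall>x\<in>S. \<bar>d x\<bar> < e"
  shows "Lp_norm mu p d < e"
proof -
  have "(\<Sum>x\<in>S. mu x * \<bar>d x\<bar> powr p) < (\<Sum>x\<in>S. mu x * e powr p)"
  proof (rule sum_strict_mono)
    show "finite S" by simp
    show "S \<noteq> {}" by (rule S_ne')
    fix x assume x: "x \<in> S"
    then have mx: "mu x > 0" by (simp add: S_def)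
    have "\<bar>d x\<bar> powr p < e powr p" by (rule powr_less_mono2) (use p d x in auto)
    then show "mu x * \<bar>d x\<bar> powr p < mu x * e powr p" using mx by simp
  qed
  also have "\<dots> = e powr p" using mu_sum_S by (simp add: sum_distrib_right[symmetric])
  finally have lt: "(\<Sum>x\<in>S. mu x * \<bar>d x\<bar> powr p) < e powr p" .
  have nn: "0 \<le> (\<Sum>x\<in>S. mu x * \<bar>d x\<bar> powr p)" by (intro sum_nonneg) (simp add: mu_nonneg)
  have "Lp_norm mu p d < (e powr p) powr (1/p)"
    unfolding Lp_norm_eq by (rule powr_less_mono2) (use p lt nn in auto)
  also have "\<dots> = e" using p e by (simp add: powr_powr)
  finally show ?thesis .
qed

lemma Lp_norm_point:
  assumes p: "p > 0" and x: "x \<in> S"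
  shows "\<bar>d x\<bar> \<le> Lp_norm mu p d / (mu x powr (1/p))"
proof -
  define s where "s = (\<Sum>x\<in>S. mu x * \<bar>d x\<bar> powr p)"
  have mx: "mu x > 0" using x by (simp add: S_def)
  have "mu x * \<bar>d x\<bar> powr p \<le> s" unfolding s_def
    by (rule member_le_sum) (use x in \<open>auto simp: mu_nonneg\<close>)
  then have le: "\<bar>d x\<bar> powr p \<le> s / mu x" using mx by (simp add: field_simps)
  have "\<bar>d x\<bar> = (\<bar>d x\<bar> powr p) powr (1/p)" using p by (simp add: powr_powr)
  also have "\<dots> \<le> (s / mu x) powr (1/p)" using p le by (intro powr_mono2) auto
  also have "\<dots> = s powr (1/p) / mu x powr (1/p)"
    using mx by (simp add: powr_divide s_def mu_nonneg sum_nonneg)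
  finally show ?thesis by (simp add: Lp_norm_eq s_def)
qed

lemma Lp_tendsto_pointwise:
  assumes p: "p > 0" and lim: "\<forall>x\<in>S. (\<lambda>n. s n x) \<longlonglongrightarrow> h x"
  shows "Lp_tendsto mu p s h"
  unfolding Lp_tendsto_def
proof (rule tendstoI)
  fix e :: real assume e: "e > 0"
  have "\<forall>x\<in>S. eventually (\<lambda>n. \<bar>s n x - h x\<bar> < e) sequentially"
  proof
    fix x assume "x \<in> S"
    then have "(\<lambda>n. s n x) \<longlonglongrightarrow> h x" using lim by blast
    from tendstoD[OF this e] show "eventually (\<lambda>n. \<bar>s n x - h x\<bar> < e) sequentially"
      by (simp add: dist_real_def)
  qed
  then have "eventually (\<lambda>n. \<forall>x\<in>S. \<bar>s n x - h x\<bar> < e) sequentially"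
    by (simp add: eventually_ball_finite_distrib)
  then show "eventually (\<lambda>n. dist (Lp_norm mu p (\<lambda>x. s n x - h x)) 0 < e) sequentially"
  proof (rule eventually_mono)
    fix n assume "\<forall>x\<in>S. \<bar>s n x - h x\<bar> < e"
    then have "Lp_norm mu p (\<lambda>x. s n x - h x) < e" by (intro Lp_norm_small p e) auto
    moreover have "Lp_norm mu p (\<lambda>x. s n x - h x) \<ge> 0" by (simp add: Lp_norm_def)
    ultimately show "dist (Lp_norm mu p (\<lambda>x. s n x - h x)) 0 < e" by (simp add: dist_real_def)
  qed
qed

lemma Lp_tendsto_imp_pointwise:
  assumes p: "p > 0" and lim: "Lp_tendsto mu p s h" and x: "x \<in> S"
  shows "(\<lambda>n. s n x) \<longlonglongrightarrow> h x"
proof -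
  have mx: "mu x powr (1/p) > 0" using x by (simp add: S_def)
  have "(\<lambda>n. Lp_norm mu p (\<lambda>x. s n x - h x) / (mu x powr (1/p))) \<longlonglongrightarrow> 0 / (mu x powr (1/p))"
    using tendsto_divide[OF lim[unfolded Lp_tendsto_def] tendsto_const[of "mu x powr (1/p)"]] mx by simp
  then have "(\<lambda>n. Lp_norm mu p (\<lambda>x. s n x - h x) / (mu x powr (1/p))) \<longlonglongrightarrow> 0" by simp
  moreover have "eventually (\<lambda>n. norm (s n x - h x) \<le> Lp_norm mu p (\<lambda>x. s n x - h x) / (mu x powr (1/p))) sequentially"
  proof (intro always_eventually allI)
    fix n show "norm (s n x - h x) \<le> Lp_norm mu p (\<lambda>x. s n x - h x) / (mu x powr (1/p))"
      using Lp_norm_point[OF p x, of "\<lambda>x. s n x - h x"] by simp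
  qed
  ultimately have "(\<lambda>n. s n x - h x) \<longlonglongrightarrow> 0"
    by (rule Lim_null_comparison[rotated])
  then show ?thesis by (simp add: LIM_zero_cancel)
qed

end


lemma ln_rate:
  fixes a :: "nat \<Rightarrow> real"
  assumes A: "A > 0" and B: "B > 0" and c: "c > 0"
    and bnd: "\<And>n. A * c^n \<le> a n \<and> a n \<le> B * c^n"
  shows "(\<lambda>n. 1 / real n * ln (a n)) \<longlonglongrightarrow> ln c"
proof (rule tendsto_sandwich[where f="\<lambda>n. ln c + ln A / real n" and h="\<lambda>n. ln c + ln B / real n"])
  show "(\<lambda>n. ln c + ln A / real n) \<longlonglongrightarrow> ln c"
    using tendsto_add[OF tendsto_const lim_const_over_n[of "ln A"]] by simp
  show "(\<lambda>n. ln c + ln B / real n) \<longlonglongrightarrow> ln c"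
    using tendsto_add[OF tendsto_const lim_const_over_n[of "ln B"]] by simp
  have "ln c + ln A / real n \<le> 1 / real n * ln (a n) \<and> 1 / real n * ln (a n) \<le> ln c + ln B / real n"
    if n: "n > 0" for n
  proof -
    have an: "a n > 0" using bnd[of n] A c by (smt (verit) zero_less_mult_iff zero_less_power)
    have l1: "ln A + real n * ln c \<le> ln (a n)"
    proof -
      have "ln (A * c^n) \<le> ln (a n)" using bnd[of n] A c an by (subst ln_le_cancel_iff) auto
      then show ?thesis using A c by (simp add: ln_mult ln_realpow)
    qed
    have l2: "ln (a n) \<le> ln B + real n * ln c"
    proof -
      have "ln (a n) \<le> ln (B * c^n)" using bnd[of n] B c an by (subst ln_le_cancel_iff) auto
      then show ?thesis using B c by (simp add: ln_mult ln_realpow)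
    qed
    have np: "real n > 0" using n by simp
    have "ln c + ln A / real n = (ln A + real n * ln c) / real n" using np by (simp add: field_simps)
    also have "\<dots> \<le> ln (a n) / real n" using l1 np by (simp add: divide_right_mono)
    finally have i1: "ln c + ln A / real n \<le> 1 / real n * ln (a n)" by simp
    have "ln (a n) / real n \<le> (ln B + real n * ln c) / real n" using l2 np by (simp add: divide_right_mono)
    also have "\<dots> = ln c + ln B / real n" using np by (simp add: field_simps)
    finally have i2: "1 / real n * ln (a n) \<le> ln c + ln B / real n" by simp
    show ?thesis using i1 i2 by simp
  qed
  then show "eventually (\<lambda>n. ln c + ln A / real n \<le> 1 / real n * ln (a n)) sequentially"
    "eventually (\<lambda>n. 1 / real n * ln (a n) \<le> ln c + ln B / real n) sequentially"
    by (auto intro!: eventually_sequentiallyI[of 1])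
qed

context finsys begin

definition "vmin = Min (vv ` S)"
definition "vmax = Max (vv ` S)"

lemma vmin_pos: "vmin > 0"
  unfolding vmin_def using S_ne' vv_pos by (subst Min_gr_iff) auto
lemma vmax_pos: "vmax > 0"
proof -
  obtain x where x: "x \<in> S" using S_ne' by blast
  have "vv x \<le> vmax" unfolding vmax_def using x by (intro Max_ge) auto
  then show ?thesis using vv_pos[OF x] by simp
qed
lemma vmin_le: "x \<in> S \<Longrightarrow> vmin \<le> vv x" unfolding vmin_def by (intro Min_le) auto
lemma vmax_ge: "x \<in> S \<Longrightarrow> vv x \<le> vmax" unfolding vmax_def by (intro Max_ge) auto

lemma one_bounds:
  assumes x: "x \<in> S"
  shows "(1/vmax) * rr^n * vv x \<le> (Mv^^n) (\<lambda>_. 1) x \<and> (Mv^^n) (\<lambda>_. 1) x \<le> (1/vmin) * rr^n * vv x"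
proof
  have "(Mv^^n) (\<lambda>y. (1/vmax) * vv y) x \<le> (Mv^^n) (\<lambda>_. 1) x"
    using x vmax_ge vmax_pos by (intro Mvn_mono) (auto simp: field_simps)
  then show "(1/vmax) * rr^n * vv x \<le> (Mv^^n) (\<lambda>_. 1) x" using Mvn_eig[OF x, where c="1/vmax" and n=n] by simp
  have "(Mv^^n) (\<lambda>_. 1) x \<le> (Mv^^n) (\<lambda>y. (1/vmin) * vv y) x"
    using x vmin_le vmin_pos by (intro Mvn_mono) (auto simp: field_simps)
  then show "(Mv^^n) (\<lambda>_. 1) x \<le> (1/vmin) * rr^n * vv x" using Mvn_eig[OF x, where c="1/vmin" and n=n] by simp
qed

lemma Mvn_one_pos: "x \<in> S \<Longrightarrow> (Mv^^n) (\<lambda>_. 1) x > 0"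
proof -
  assume x: "x \<in> S"
  have "0 < (1/vmax) * rr^n * vv x" using vmax_pos rr_pos vv_pos[OF x] by simp
  then show ?thesis using one_bounds[OF x, of n] by linarith
qed

lemma L_lim: "(\<lambda>n. 1 / real n * ln (\<Sum>x\<in>UNIV. mu x * (Mv^^n) (\<lambda>_. 1) x)) \<longlonglongrightarrow> ln rr"
proof (rule ln_rate)
  define Q where "Q = (\<Sum>x\<in>S. mu x * vv x)"
  have Q: "Q > 0" unfolding Q_def using S_ne' by (intro sum_pos) (auto simp: S_def vv_pos)
  show "(1/vmax) * Q > 0" "(1/vmin) * Q > 0" using Q vmax_pos vmin_pos by auto
  show "rr > 0" by (rule rr_pos)
  fix n
  have "(1/vmax) * Q * rr^n = (\<Sum>x\<in>S. mu x * ((1/vmax) * rr^n * vv x))"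
    by (simp add: Q_def sum_distrib_left algebra_simps)
  also have "\<dots> \<le> (\<Sum>x\<in>S. mu x * (Mv^^n) (\<lambda>_. 1) x)"
    using one_bounds by (intro sum_mono mult_left_mono) (auto simp: mu_nonneg)
  also have "\<dots> = (\<Sum>x\<in>UNIV. mu x * (Mv^^n) (\<lambda>_. 1) x)" by (rule sum_S[symmetric])
  finally have l: "(1/vmax) * Q * rr^n \<le> (\<Sum>x\<in>UNIV. mu x * (Mv^^n) (\<lambda>_. 1) x)" .
  have "(\<Sum>x\<in>UNIV. mu x * (Mv^^n) (\<lambda>_. 1) x) = (\<Sum>x\<in>S. mu x * (Mv^^n) (\<lambda>_. 1) x)" by (rule sum_S)
  also have "\<dots> \<le> (\<Sum>x\<in>S. mu x * ((1/vmin) * rr^n * vv x))"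
    using one_bounds by (intro sum_mono mult_left_mono) (auto simp: mu_nonneg)
  also have "\<dots> = (1/vmin) * Q * rr^n"
    by (simp add: Q_def sum_distrib_left algebra_simps)
  finally show "(1/vmax) * Q * rr^n \<le> (\<Sum>x\<in>UNIV. mu x * (Mv^^n) (\<lambda>_. 1) x) \<and>
      (\<Sum>x\<in>UNIV. mu x * (Mv^^n) (\<lambda>_. 1) x) \<le> (1/vmin) * Q * rr^n" using l by simp
qed

lemma powr_pow_swap: "c > 0 \<Longrightarrow> (c^n) powr p = (c powr p)^n" for c :: real
  by (simp add: powr_realpow[symmetric] powr_powr mult.commute)

lemma Lp_lim:
  assumes p: "p > 0"
  shows "(\<lambda>n. (1 / (real n * p)) * ln (\<Sum>x\<in>UNIV. mu x * ((Mv^^n) (\<lambda>_. 1) x) powr p)) \<longlonglongrightarrow> ln rr"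
proof -
  define Q where "Q = (\<Sum>x\<in>S. mu x * vv x powr p)"
  have Q: "Q > 0" unfolding Q_def
  proof (rule sum_pos)
    fix i assume i: "i \<in> S"
    then show "0 < mu i * vv i powr p" using vv_pos[OF i] by (simp add: S_def)
  qed (use S_ne' in auto)
  have lim: "(\<lambda>n. 1 / real n * ln (\<Sum>x\<in>UNIV. mu x * ((Mv^^n) (\<lambda>_. 1) x) powr p)) \<longlonglongrightarrow> ln (rr powr p)"
  proof (rule ln_rate)
    show "(1/vmax) powr p * Q > 0" "(1/vmin) powr p * Q > 0" using Q vmax_pos vmin_pos by auto
    show "rr powr p > 0" using rr_pos by simp
    fix n
    have pw: "((1/vmax) * rr^n * vv x) powr p = (1/vmax) powr p * (rr powr p)^n * vv x powr p"
      "((1/vmin) * rr^n * vv x) powr p = (1/vmin) powr p * (rr powr p)^n * vv x powr p"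
      if "x \<in> S" for x
    proof -
      have vx: "vv x > 0" using vv_pos[OF that] .
      have "((1/vmax) * rr^n * vv x) powr p = ((1/vmax) * rr^n) powr p * vv x powr p"
        by (rule powr_mult; use vmax_pos rr_pos vx in simp)
      also have "\<dots> = (1/vmax) powr p * (rr^n) powr p * vv x powr p"
        using vmax_pos rr_pos by (subst powr_mult) auto
      finally show "((1/vmax) * rr^n * vv x) powr p = (1/vmax) powr p * (rr powr p)^n * vv x powr p"
        using rr_pos by (simp add: powr_pow_swap)
      have "((1/vmin) * rr^n * vv x) powr p = ((1/vmin) * rr^n) powr p * vv x powr p"
        by (rule powr_mult; use vmin_pos rr_pos vx in simp)
      also have "\<dots> = (1/vmin) powr p * (rr^n) powr p * vv x powr p"
        using vmin_pos rr_pos by (subst powr_mult) auto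
      finally show "((1/vmin) * rr^n * vv x) powr p = (1/vmin) powr p * (rr powr p)^n * vv x powr p"
        using rr_pos by (simp add: powr_pow_swap)
    qed
    have "(1/vmax) powr p * Q * (rr powr p)^n = (\<Sum>x\<in>S. mu x * ((1/vmax) powr p * (rr powr p)^n * vv x powr p))"
      by (simp add: Q_def sum_distrib_left algebra_simps)
    also have "\<dots> = (\<Sum>x\<in>S. mu x * ((1/vmax) * rr^n * vv x) powr p)"
    proof (rule sum.cong[OF refl])
      fix x assume x: "x \<in> S"
      show "mu x * ((1/vmax) powr p * (rr powr p)^n * vv x powr p) = mu x * ((1/vmax) * rr^n * vv x) powr p" using pw(1)[OF x] by simp
    qed
    also have "\<dots> \<le> (\<Sum>x\<in>S. mu x * ((Mv^^n) (\<lambda>_. 1) x) powr p)"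
    proof (intro sum_mono mult_left_mono)
      fix x assume x: "x \<in> S"
      show "((1/vmax) * rr^n * vv x) powr p \<le> ((Mv^^n) (\<lambda>_. 1) x) powr p"
        using one_bounds[OF x, of n] p vmax_pos rr_pos vv_pos[OF x] by (intro powr_mono2) auto
    qed (simp add: mu_nonneg)
    also have "\<dots> = (\<Sum>x\<in>UNIV. mu x * ((Mv^^n) (\<lambda>_. 1) x) powr p)" by (rule sum_S[symmetric])
    finally have l: "(1/vmax) powr p * Q * (rr powr p)^n \<le> (\<Sum>x\<in>UNIV. mu x * ((Mv^^n) (\<lambda>_. 1) x) powr p)" .
    have "(\<Sum>x\<in>UNIV. mu x * ((Mv^^n) (\<lambda>_. 1) x) powr p) = (\<Sum>x\<in>S. mu x * ((Mv^^n) (\<lambda>_. 1) x) powr p)"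
      by (rule sum_S)
    also have "\<dots> \<le> (\<Sum>x\<in>S. mu x * ((1/vmin) * rr^n * vv x) powr p)"
    proof (intro sum_mono mult_left_mono)
      fix x assume x: "x \<in> S"
      show "((Mv^^n) (\<lambda>_. 1) x) powr p \<le> ((1/vmin) * rr^n * vv x) powr p"
        using one_bounds[OF x, of n] p Mvn_one_pos[OF x, of n] by (intro powr_mono2) auto
    qed (simp add: mu_nonneg)
    also have "\<dots> = (\<Sum>x\<in>S. mu x * ((1/vmin) powr p * (rr powr p)^n * vv x powr p))"
    proof (rule sum.cong[OF refl])
      fix x assume x: "x \<in> S"
      show "mu x * ((1/vmin) * rr^n * vv x) powr p = mu x * ((1/vmin) powr p * (rr powr p)^n * vv x powr p)" using pw(2)[OF x] by simp
    qed
    also have "\<dots> = (1/vmin) powr p * Q * (rr powr p)^n"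
      by (simp add: Q_def sum_distrib_left algebra_simps)
    finally show "(1/vmax) powr p * Q * (rr powr p)^n \<le> (\<Sum>x\<in>UNIV. mu x * ((Mv^^n) (\<lambda>_. 1) x) powr p) \<and>
      (\<Sum>x\<in>UNIV. mu x * ((Mv^^n) (\<lambda>_. 1) x) powr p) \<le> (1/vmin) powr p * Q * (rr powr p)^n" using l by simp
  qed
  have "(\<lambda>n. (1/p) * (1 / real n * ln (\<Sum>x\<in>UNIV. mu x * ((Mv^^n) (\<lambda>_. 1) x) powr p))) \<longlonglongrightarrow> (1/p) * ln (rr powr p)"
    by (rule tendsto_mult[OF tendsto_const lim])
  moreover have "(1/p) * ln (rr powr p) = ln rr" using p rr_pos by (simp add: ln_powr)
  ultimately show ?thesis by (simp add: field_simps)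
qed

end

context finsys begin

lemma compact_Mv:
  assumes p: "p > 0"
  shows "compact_op mu p Mv"
  unfolding compact_op_def
proof (intro allI impI)
  fix s :: "nat \<Rightarrow> 'x \<Rightarrow> real"
  assume "(\<forall>n. Lp_mem mu p (s n)) \<and> bounded (range (\<lambda>n. Lp_norm mu p (s n)))"
  then have "bounded (range (\<lambda>n. Lp_norm mu p (s n)))" by blast
  then obtain B where B: "\<And>n. \<bar>Lp_norm mu p (s n)\<bar> \<le> B" by (auto simp: bounded_iff)
  have B0: "B \<ge> 0" using B[of 0] by linarith
  define C where "C = (\<Sum>y\<in>S. B / mu y powr (1/p))"
  have sC: "\<bar>s n y\<bar> \<le> C" if y: "y \<in> S" for n y
  proof -
    have "\<bar>s n y\<bar> \<le> Lp_norm mu p (s n) / mu y powr (1/p)" by (rule Lp_norm_point[OF p y])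
    also have "\<dots> \<le> B / mu y powr (1/p)" using B[of n] y by (intro divide_right_mono) auto
    also have "\<dots> \<le> C" unfolding C_def
      by (rule member_le_sum) (use y B0 in auto)
    finally show ?thesis .
  qed
  have C0: "C \<ge> 0"
  proof -
    obtain y where "y \<in> S" using S_ne' by blast
    then show ?thesis using sC[of y 0] by linarith
  qed
  define u where "u n = (\<chi> y. if y \<in> S then s n y else 0)" for n
  have "bounded (range u)"
    unfolding bounded_iff
  proof (intro exI ballI)
    fix z assume "z \<in> range u"
    then obtain n where z: "z = u n" by blast
    have "norm z \<le> (\<Sum>i\<in>UNIV. \<bar>z$i\<bar>)" by (rule norm_le_l1_cart)
    also have "\<dots> \<le> (\<Sum>i\<in>(UNIV::'x set). C)"
      by (rule sum_mono) (use sC C0 in \<open>auto simp: z u_def order_trans[OF _ sC] abs_ge_zero\<close>)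
    finally show "norm z \<le> of_nat CARD('x) * C" by simp
  qed
  then obtain l r where r: "strict_mono r" and lim: "(u \<circ> r) \<longlonglongrightarrow> l"
    using bounded_imp_convergent_subsequence by blast
  have cau: "Cauchy (u \<circ> r)" using lim by (rule LIMSEQ_imp_Cauchy)
  define K where "K = 1 + (\<Sum>x\<in>UNIV. \<Sum>y\<in>UNIV. M x y)"
  have Kp: "K > 0" unfolding K_def using M_nonneg by (smt (verit) sum_nonneg)
  have "\<forall>e>0. \<exists>N. \<forall>m\<ge>N. \<forall>n\<ge>N. Lp_norm mu p (\<lambda>x. Mv (s (r m)) x - Mv (s (r n)) x) < e"
  proof (intro allI impI)
    fix e :: real assume e: "e > 0"
    obtain N where N: "\<And>m n. m \<ge> N \<Longrightarrow> n \<ge> N \<Longrightarrow> dist ((u \<circ> r) m) ((u \<circ> r) n) < e / K"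
      using cau e Kp unfolding Cauchy_def by (meson divide_pos_pos)
    show "\<exists>N. \<forall>m\<ge>N. \<forall>n\<ge>N. Lp_norm mu p (\<lambda>x. Mv (s (r m)) x - Mv (s (r n)) x) < e"
    proof (intro exI allI impI)
      fix m n assume mn: "m \<ge> N" "n \<ge> N"
      define d where "d = dist (u (r m)) (u (r n))"
      have d: "d < e / K" "d \<ge> 0" using N[OF mn] by (auto simp: d_def)
      show "Lp_norm mu p (\<lambda>x. Mv (s (r m)) x - Mv (s (r n)) x) < e"
      proof (rule Lp_norm_small[OF p e], intro ballI)
        fix x assume x: "x \<in> S"
        have "Mv (s (r m)) x - Mv (s (r n)) x = (\<Sum>y\<in>S. M x y * (s (r m) y - s (r n) y))"
          using x by (simp add: Mv_S sum_subtractf algebra_simps)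
        then have "\<bar>Mv (s (r m)) x - Mv (s (r n)) x\<bar> \<le> (\<Sum>y\<in>S. M x y * \<bar>s (r m) y - s (r n) y\<bar>)"
          by (simp add: order_trans[OF sum_abs] abs_mult M_nonneg)
        also have "\<dots> \<le> (\<Sum>y\<in>S. M x y * d)"
        proof (intro sum_mono mult_left_mono)
          fix y assume y: "y \<in> S"
          have "\<bar>s (r m) y - s (r n) y\<bar> = \<bar>(u (r m) - u (r n))$y\<bar>" using y by (simp add: u_def)
          also have "\<dots> \<le> norm (u (r m) - u (r n))" by (rule component_le_norm_cart)
          finally show "\<bar>s (r m) y - s (r n) y\<bar> \<le> d" by (simp add: d_def dist_norm)
        qed (simp add: M_nonneg)
        also have "\<dots> = (\<Sum>y\<in>S. M x y) * d" by (simp add: sum_distrib_right)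
        also have "\<dots> \<le> (K - 1) * d"
        proof (rule mult_right_mono[OF _ d(2)])
          have "(\<Sum>y\<in>S. M x y) \<le> (\<Sum>y\<in>UNIV. M x y)" by (rule sum_mono2) (auto simp: M_nonneg)
          also have "\<dots> \<le> (\<Sum>x\<in>UNIV. \<Sum>y\<in>UNIV. M x y)"
            by (rule member_le_sum) (auto simp: M_nonneg sum_nonneg)
          finally show "(\<Sum>y\<in>S. M x y) \<le> K - 1" by (simp add: K_def)
        qed
        also have "\<dots> < e"
        proof -
          have "(K - 1) * d \<le> K * d" using d(2) by (simp add: algebra_simps)
          also have "\<dots> < K * (e / K)" using d Kp by (intro mult_strict_left_mono) auto
          also have "\<dots> = e" using Kp by simp
          finally show ?thesis .
        qed
        finally show "\<bar>Mv (s (r m)) x - Mv (s (r n)) x\<bar> < e" .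
      qed
    qed
  qed
  then show "\<exists>r::nat\<Rightarrow>nat. strict_mono r \<and> (\<forall>e>0. \<exists>N. \<forall>m\<ge>N. \<forall>n\<ge>N. Lp_norm mu p (\<lambda>x. Mv (s (r m)) x - Mv (s (r n)) x) < e)"
    using r by blast
qed

end

context finsys begin

lemma T_mono: "(\<forall>y. f y \<le> g y) \<Longrightarrow> T f x \<le> T g x"
  unfolding T_def Mv_def by (simp add: sum_mono mult_left_mono M_nonneg)

lemma Mv_zero: "Mv (\<lambda>_. 0) = (\<lambda>_. 0)"
  by (simp add: Mv_def fun_eq_iff)

lemma Tn0_inc: "(T^^n) (\<lambda>_. 0) x \<le> (T^^Suc n) (\<lambda>_. 0) x"
proof (induction n arbitrary: x)
  case 0
  then show ?case by (simp add: T_def Mv_zero b_nonneg)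
next
  case (Suc n)
  then show ?case by (simp del: funpow.simps add: funpow.simps(2)[of "Suc n"] funpow.simps(2)[of n] o_def T_mono)
qed

lemma Tn0_nonneg: "(T^^n) (\<lambda>_. 0) x \<ge> 0"
proof (induction n arbitrary: x)
  case (Suc n)
  then show ?case using Suc.IH[of x] Tn0_inc[of n x] by linarith
qed simp

definition "bmax = Max (b ` S)"
definition "cb = bmax / vmin"

lemma b_le: "x \<in> S \<Longrightarrow> b x \<le> cb * vv x"
proof -
  assume x: "x \<in> S"
  have "b x \<le> bmax" unfolding bmax_def using x by (intro Max_ge) auto
  also have "\<dots> = cb * vmin" using vmin_pos by (simp add: cb_def)
  also have "\<dots> \<le> cb * vv x"
  proof (rule mult_left_mono[OF vmin_le[OF x]])
    have "0 \<le> b x" by (rule b_nonneg)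
    also have "\<dots> \<le> bmax" unfolding bmax_def using x by (intro Max_ge) auto
    finally show "0 \<le> cb" using vmin_pos by (simp add: cb_def)
  qed
  finally show ?thesis .
qed

lemma Mv_scale: "Mv (\<lambda>y. c * f y) x = c * Mv f x"
  by (simp add: Mv_def sum_distrib_left algebra_simps)

context
  assumes r1: "rr < 1"
begin

definition "KK = cb / (1 - rr)"

lemma Tn0_bound: "x \<in> S \<Longrightarrow> (T^^n) (\<lambda>_. 0) x \<le> KK * vv x"
proof (induction n arbitrary: x)
  case 0
  have "0 \<le> b x" by (rule b_nonneg)
  also have "\<dots> \<le> cb * vv x" by (rule b_le[OF 0])
  finally have "0 \<le> cb" using vv_pos[OF 0] by (simp add: zero_le_mult_iff)
  then have "KK \<ge> 0" using r1 by (simp add: KK_def)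
  then show ?case using vv_pos[OF 0] by simp
next
  case (Suc n)
  have "(T^^Suc n) (\<lambda>_. 0) x = Mv ((T^^n) (\<lambda>_. 0)) x + b x" by (simp add: T_def)
  also have "\<dots> \<le> Mv (\<lambda>y. KK * vv y) x + cb * vv x"
    using Mv_mono[OF Suc.prems] Suc.IH b_le[OF Suc.prems] by (intro add_mono) auto
  also have "\<dots> = KK * rr * vv x + cb * vv x" by (simp add: Mv_scale vv_eig[OF Suc.prems])
  also have "\<dots> = KK * vv x" using r1 by (simp add: KK_def field_simps)
  finally show ?case .
qed

definition "hs x = lim (\<lambda>n. (T^^n) (\<lambda>_. 0) x)"

lemma hs_lim: "x \<in> S \<Longrightarrow> (\<lambda>n. (T^^n) (\<lambda>_. 0) x) \<longlonglongrightarrow> hs x"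
proof -
  assume x: "x \<in> S"
  have inc: "incseq (\<lambda>n. (T^^n) (\<lambda>_. 0) x)" by (rule incseq_SucI) (rule Tn0_inc)
  have bdd: "bdd_above (range (\<lambda>n. (T^^n) (\<lambda>_. 0) x))"
    using Tn0_bound[OF x] by (intro bdd_aboveI[where M="KK * vv x"]) auto
  have "(\<lambda>n. (T^^n) (\<lambda>_. 0) x) \<longlonglongrightarrow> (SUP n. (T^^n) (\<lambda>_. 0) x)"
    by (rule LIMSEQ_incseq_SUP[OF bdd inc])
  then show ?thesis unfolding hs_def by (simp add: limI)
qed

lemma hs_nonneg: "x \<in> S \<Longrightarrow> hs x \<ge> 0"
  by (rule LIMSEQ_le_const[OF hs_lim]) (auto simp: Tn0_nonneg)

lemma hs_fix: "x \<in> S \<Longrightarrow> T hs x = hs x"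
proof -
  assume x: "x \<in> S"
  have l1: "(\<lambda>n. (T^^Suc n) (\<lambda>_. 0) x) \<longlonglongrightarrow> hs x"
    using hs_lim[OF x] by (rule LIMSEQ_Suc)
  have "(\<lambda>n. (\<Sum>y\<in>S. M x y * (T^^n) (\<lambda>_. 0) y) + b x) \<longlonglongrightarrow> (\<Sum>y\<in>S. M x y * hs y) + b x"
  proof (rule tendsto_add[OF tendsto_sum tendsto_const])
    fix y assume "y \<in> S"
    then show "(\<lambda>n. M x y * (T^^n) (\<lambda>_. 0) y) \<longlonglongrightarrow> M x y * hs y"
      by (intro tendsto_mult_left hs_lim)
  qed
  moreover have "(\<lambda>n. (T^^Suc n) (\<lambda>_. 0) x) = (\<lambda>n. (\<Sum>y\<in>S. M x y * (T^^n) (\<lambda>_. 0) y) + b x)"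
    using x by (simp add: T_def Mv_S)
  ultimately have "(\<lambda>n. (T^^Suc n) (\<lambda>_. 0) x) \<longlonglongrightarrow> T hs x"
    using x by (simp add: T_def Mv_S)
  then show ?thesis using l1 LIMSEQ_unique by blast
qed

lemma Mvn_to_zero: "x \<in> S \<Longrightarrow> (\<lambda>n. (Mv^^n) d x) \<longlonglongrightarrow> 0"
proof -
  assume x: "x \<in> S"
  define c where "c = (\<Sum>y\<in>S. \<bar>d y\<bar>) / vmin"
  have c0: "c \<ge> 0" unfolding c_def using vmin_pos by (intro divide_nonneg_pos sum_nonneg) auto
  have dle0: "\<bar>d y\<bar> \<le> c * vv y" if y: "y \<in> S" for y
  proof -
    have "\<bar>d y\<bar> \<le> (\<Sum>y\<in>S. \<bar>d y\<bar>)" by (rule member_le_sum) (use y in auto)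
    also have "\<dots> = c * vmin" using vmin_pos by (simp add: c_def)
    also have "\<dots> \<le> c * vv y" by (rule mult_left_mono[OF vmin_le[OF y] c0])
    finally show ?thesis .
  qed
  have dup: "\<forall>y\<in>S. d y \<le> c * vv y" using dle0 abs_ge_self order_trans by blast
  have dlo: "\<forall>y\<in>S. (- c) * vv y \<le> d y"
  proof
    fix y assume y: "y \<in> S"
    have "- d y \<le> c * vv y" using dle0[OF y] abs_ge_minus_self order_trans by blast
    then show "(- c) * vv y \<le> d y" by simp
  qed
  have up: "(Mv^^n) d x \<le> c * rr^n * vv x" for n
  proof -
    have "(Mv^^n) d x \<le> (Mv^^n) (\<lambda>y. c * vv y) x" by (rule Mvn_mono[OF x dup])
    then show ?thesis using Mvn_eig[OF x, where c=c and n=n] by simp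
  qed
  have lo: "- c * rr^n * vv x \<le> (Mv^^n) d x" for n
  proof -
    have "(Mv^^n) (\<lambda>y. (- c) * vv y) x \<le> (Mv^^n) d x" by (rule Mvn_mono[OF x dlo])
    then show ?thesis using Mvn_eig[OF x, where c="-c" and n=n] by simp
  qed
  have nr: "norm rr < 1" using rr_pos r1 by simp
  have rn: "(\<lambda>n. rr^n) \<longlonglongrightarrow> 0" by (rule LIMSEQ_power_zero[OF nr])
  have l1: "(\<lambda>n. c * rr^n * vv x) \<longlonglongrightarrow> 0"
    using tendsto_mult_right[OF tendsto_mult_left[OF rn, of c], of "vv x"] by simp
  have l2: "(\<lambda>n. - c * rr^n * vv x) \<longlonglongrightarrow> 0"
    using tendsto_mult_right[OF tendsto_mult_left[OF rn, of "-c"], of "vv x"] by simp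
  show ?thesis
  proof (rule tendsto_sandwich[OF always_eventually always_eventually l2 l1])
    show "\<forall>n. - c * rr^n * vv x \<le> (Mv^^n) d x" using lo by blast
    show "\<forall>n. (Mv^^n) d x \<le> c * rr^n * vv x" using up by blast
  qed
qed

lemma Tn_fix: "(\<forall>y\<in>S. T h y = h y) \<Longrightarrow> x \<in> S \<Longrightarrow> (T^^n) h x = h x"
proof (induction n arbitrary: x)
  case (Suc n)
  have "(T^^Suc n) h x = T ((T^^n) h) x" by simp
  also have "\<dots> = T h x"
  proof -
    have "Mv ((T^^n) h) x = Mv h x" by (rule Mv_local[OF Suc.prems(2)]) (use Suc.IH Suc.prems in auto)
    then show ?thesis by (simp only: T_def[of "(T^^n) h" x] T_def[of h x])
  qed
  also have "\<dots> = h x" using Suc by simp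
  finally show ?case .
qed simp

lemma Tn_conv: "x \<in> S \<Longrightarrow> (\<lambda>n. (T^^n) h x) \<longlonglongrightarrow> hs x"
proof -
  assume x: "x \<in> S"
  have hf: "\<forall>y\<in>S. T hs y = hs y" using hs_fix by blast
  have e: "(T^^n) h x - hs x = (Mv^^n) (\<lambda>y. h y - hs y) x" for n
    using fun_cong[OF Tn_diff[of n h hs], of x] Tn_fix[OF hf x, of n] by simp
  have "(\<lambda>n. (T^^n) h x - hs x) \<longlonglongrightarrow> 0" unfolding e by (rule Mvn_to_zero[OF x])
  then show ?thesis by (simp add: LIM_zero_cancel)
qed

end

end

context finsys begin

definition "Phi f = (\<Sum>x\<in>S. ww x * f x)"

lemma Phi_Mv: "Phi (Mv f) = rr * Phi f"
proof -
  have "Phi (Mv f) = (\<Sum>x\<in>S. ww x * (\<Sum>y\<in>S. M x y * f y))"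
    unfolding Phi_def by (rule sum.cong[OF refl]) (simp add: Mv_S)
  also have "\<dots> = (\<Sum>x\<in>S. \<Sum>y\<in>S. ww x * M x y * f y)"
    by (simp add: sum_distrib_left mult.assoc)
  also have "\<dots> = (\<Sum>y\<in>S. \<Sum>x\<in>S. ww x * M x y * f y)" by (rule sum.swap)
  also have "\<dots> = (\<Sum>y\<in>S. (\<Sum>x\<in>S. ww x * M x y) * f y)"
    by (simp add: sum_distrib_right)
  also have "\<dots> = (\<Sum>y\<in>S. rr * ww y * f y)"
    by (rule sum.cong[OF refl]) (simp add: ww_eig)
  also have "\<dots> = rr * Phi f" by (simp add: Phi_def sum_distrib_left mult.assoc)
  finally show ?thesis .
qed

lemma Phi_b: "Phi b > 0"
proof -
  obtain z where z: "mu z > 0" "b z > 0" using bpos by blast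
  then have zS: "z \<in> S" by (simp add: S_def)
  have "0 < ww z * b z" using ww_pos[OF zS] z by simp
  also have "\<dots> \<le> Phi b" unfolding Phi_def
    by (rule member_le_sum) (use zS ww_nonneg b_nonneg in auto)
  finally show ?thesis .
qed

lemma Phi_T: "Phi (T f) = rr * Phi f + Phi b"
proof -
  have "Phi (T f) = Phi (Mv f) + Phi b" unfolding Phi_def T_def by (simp add: sum.distrib algebra_simps)
  then show ?thesis by (simp add: Phi_Mv)
qed

lemma Phi_nonneg: "(\<forall>x\<in>S. f x \<ge> 0) \<Longrightarrow> Phi f \<ge> 0"
  unfolding Phi_def by (intro sum_nonneg) (simp add: ww_nonneg)

lemma Phi_grow:
  assumes r1: "rr \<ge> 1" and h: "\<forall>x\<in>S. h x \<ge> 0"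
  shows "Phi ((T^^n) h) \<ge> real n * Phi b"
proof (induction n)
  case 0
  then show ?case using Phi_nonneg[OF h] by simp
next
  case (Suc n)
  have pn: "Phi ((T^^n) h) \<ge> 0" using Suc Phi_b by (smt (verit) of_nat_0_le_iff zero_le_mult_iff)
  have "Phi ((T^^Suc n) h) = rr * Phi ((T^^n) h) + Phi b" by (simp add: Phi_T)
  also have "\<dots> \<ge> Phi ((T^^n) h) + Phi b" using r1 pn by (simp add: mult_le_cancel_right1 mult_right_mono[of 1 rr, simplified])
  finally show ?case using Suc by (simp add: algebra_simps)
qed

lemma no_conv:
  assumes r1: "rr \<ge> 1" and p: "p > 0" and h: "Hp_mem mu p h"
    and lim: "Lp_tendsto mu p (\<lambda>n. (T^^n) h) h'"
  shows False
proof -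
  have h0: "\<forall>x\<in>S. h x \<ge> 0" using h by (simp add: Hp_iff)
  have "(\<lambda>n. Phi ((T^^n) h)) \<longlonglongrightarrow> Phi h'"
    unfolding Phi_def
    by (intro tendsto_sum tendsto_mult_left Lp_tendsto_imp_pointwise[OF p lim])
  then have "Bseq (\<lambda>n. Phi ((T^^n) h))" by (rule convergent_imp_Bseq[OF convergentI])
  then obtain B where B: "\<And>n. norm (Phi ((T^^n) h)) \<le> B" by (auto simp: Bseq_def)
  obtain n where n: "B < real n * Phi b" using ex_less_of_nat_mult[OF Phi_b] by blast
  have "real n * Phi b \<le> Phi ((T^^n) h)" by (rule Phi_grow[OF r1 h0])
  also have "\<dots> \<le> B" using B[of n] by simp
  finally show False using n by simp
qed

end

context finsys begin

lemma Tn_fix0: "(\<forall>y\<in>S. T h y = h y) \<Longrightarrow> x \<in> S \<Longrightarrow> (T^^n) h x = h x"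
proof (induction n arbitrary: x)
  case (Suc n)
  have "(T^^Suc n) h x = T ((T^^n) h) x" by simp
  also have "\<dots> = T h x"
  proof -
    have "Mv ((T^^n) h) x = Mv h x" by (rule Mv_local[OF Suc.prems(2)]) (use Suc.IH Suc.prems in auto)
    then show ?thesis by (simp only: T_def[of "(T^^n) h" x] T_def[of h x])
  qed
  also have "\<dots> = h x" using Suc by simp
  finally show ?case .
qed simp

lemma Markov_sol_iff: "Markov_sol mu p T h \<longleftrightarrow> (\<forall>x\<in>S. h x \<ge> 0 \<and> T h x = h x)"
  unfolding Markov_sol_def Hp_iff ae_eq_iff by auto

lemma sol_conv:
  assumes p: "p > 0" and h: "Markov_sol mu p T h"
  shows "Lp_tendsto mu p (\<lambda>n. (T^^n) h) h"
proof (rule Lp_tendsto_pointwise[OF p], intro ballI)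
  fix x assume x: "x \<in> S"
  have "\<forall>y\<in>S. T h y = h y" using h by (simp add: Markov_sol_iff)
  then have "(\<lambda>n. (T^^n) h x) = (\<lambda>n. h x)" using Tn_fix0[OF _ x] by auto
  then show "(\<lambda>n. (T^^n) h x) \<longlonglongrightarrow> h x" by simp
qed

lemma loc_main:
  assumes p1: "p \<ge> 1"
  shows "A3 mu p Mv b \<and>
    ((\<exists>h. Markov_sol mu p T h) \<longleftrightarrow> ln rr < 0) \<and>
    ((\<exists>h. Markov_sol mu p T h \<and> (\<forall>h'. Markov_sol mu p T h' \<longrightarrow> ae_eq mu h' h)) \<longleftrightarrow> ln rr < 0) \<and>
    ((\<exists>h h'. Hp_mem mu p h \<and> Hp_mem mu p h' \<and> Lp_tendsto mu p (\<lambda>n. (T^^n) h) h') \<longleftrightarrow> ln rr < 0) \<and>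
    ((\<exists>hs. Markov_sol mu p T hs \<and> (\<forall>h'. Markov_sol mu p T h' \<longrightarrow> ae_eq mu h' hs) \<and>
        (\<forall>h. Hp_mem mu p h \<longrightarrow> Lp_tendsto mu p (\<lambda>n. (T^^n) h) hs)) \<longleftrightarrow> ln rr < 0)"
proof -
  have p: "p > 0" using p1 by simp
  have lnr: "ln rr < 0 \<longleftrightarrow> rr < 1" using rr_pos by simp
  have A3: "A3 mu p Mv b"
    unfolding A3_def
  proof (intro conjI allI impI)
    show "Hp_mem mu p b" by (simp add: Hp_iff b_nonneg)
    fix h show "Lp_mem mu p (Mv h)" by (rule Lp_mem_all)
  next
    show "\<exists>i\<ge>1. compact_op mu p (Mv ^^ i)"
      using compact_Mv[OF p] by (intro exI[of _ 1]) simp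
  qed
  show ?thesis
  proof (cases "rr < 1")
    case True
    have sol: "Markov_sol mu p T hs" unfolding Markov_sol_iff
      using hs_nonneg[OF True] hs_fix[OF True] by auto
    have uniq: "ae_eq mu h' hs" if h': "Markov_sol mu p T h'" for h'
      unfolding ae_eq_iff
    proof
      fix x assume x: "x \<in> S"
      have "\<forall>y\<in>S. T h' y = h' y" using h' by (simp add: Markov_sol_iff)
      then have "(\<lambda>n. (T^^n) h' x) = (\<lambda>n. h' x)" using Tn_fix0[OF _ x] by auto
      moreover have "(\<lambda>n. (T^^n) h' x) \<longlonglongrightarrow> hs x" by (rule Tn_conv[OF True x])
      ultimately have "(\<lambda>n. h' x) \<longlonglongrightarrow> hs x" by simp
      then show "h' x = hs x" using LIMSEQ_unique tendsto_const by blast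
    qed
    have conv: "Lp_tendsto mu p (\<lambda>n. (T^^n) h) hs" for h
      by (rule Lp_tendsto_pointwise[OF p]) (use Tn_conv[OF True] in blast)
    have hsH: "Hp_mem mu p hs" using sol by (simp add: Markov_sol_def)
    show ?thesis using A3 True lnr sol uniq conv hsH by blast
  next
    case False
    then have r1: "rr \<ge> 1" by simp
    have nod: "\<not> (\<exists>h h'. Hp_mem mu p h \<and> Hp_mem mu p h' \<and> Lp_tendsto mu p (\<lambda>n. (T^^n) h) h')"
      using no_conv[OF r1 p] by blast
    have nob: "\<not> (\<exists>h. Markov_sol mu p T h)"
    proof
      assume "\<exists>h. Markov_sol mu p T h"
      then obtain h where h: "Markov_sol mu p T h" by blast
      then have "Hp_mem mu p h" by (simp add: Markov_sol_def)
      then show False using nod sol_conv[OF p h] by blast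
    qed
    show ?thesis using A3 False lnr nod nob by blast
  qed
qed

end


lemma pos_integral:
  fixes f :: "'w \<Rightarrow> real"
  assumes nu: "prob_space nu" and int: "integrable nu f" and nn: "\<And>x. f x \<ge> 0"
    and npos: "\<not> (AE x in nu. f x = 0)"
  shows "integral\<^sup>L nu f > 0"
proof -
  have "integral\<^sup>L nu f \<ge> 0" using nn by simp
  moreover have "integral\<^sup>L nu f \<noteq> 0"
    using integral_nonneg_eq_0_iff_AE[OF int] nn npos by auto
  ultimately show ?thesis by simp
qed

lemma Ppow_nonneg: "\<forall>x y. P x y \<ge> 0 \<Longrightarrow> Ppow P n x y \<ge> 0"
  by (induction n arbitrary: x) (auto intro!: sum_nonneg)

lemma sum_pos_ex: "finite A \<Longrightarrow> (\<Sum>x\<in>A. f x) > (0::real) \<Longrightarrow> \<exists>x\<in>A. f x > 0"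
  by (meson not_le sum_nonpos)

lemma Ppow_reach:
  fixes P :: "'x::finite \<Rightarrow> 'x \<Rightarrow> real"
  assumes P0: "\<forall>x y. P x y \<ge> 0" and phib: "\<And>x y. phb x y > 0"
    and cl: "\<And>x y. mu x > 0 \<Longrightarrow> P x y > 0 \<Longrightarrow> mu y > 0"
  shows "Ppow P n x y > 0 \<Longrightarrow> mu x > 0 \<Longrightarrow> mu y > 0 \<Longrightarrow>
    (x, y) \<in> {(x,y). mu x > 0 \<and> mu y > 0 \<and> P x y * phb x y > 0}\<^sup>*"
proof (induction n arbitrary: x)
  case 0
  then show ?case by (simp split: if_splits)
next
  case (Suc n)
  have "(\<Sum>z\<in>UNIV. P x z * Ppow P n z y) > 0" using Suc.prems(1) by simp
  then obtain z where z: "P x z * Ppow P n z y > 0" using sum_pos_ex[OF finite] by blast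
  have pz: "P x z > 0" and qz: "Ppow P n z y > 0"
    using z P0 Ppow_nonneg[OF P0, of n z y] by (auto simp: zero_less_mult_iff)
  have mz: "mu z > 0" using cl[OF Suc.prems(2) pz] .
  have "(x, z) \<in> {(x,y). mu x > 0 \<and> mu y > 0 \<and> P x y * phb x y > 0}"
    using Suc.prems(2) mz pz phib[of x z] by simp
  moreover have "(z, y) \<in> {(x,y). mu x > 0 \<and> mu y > 0 \<and> P x y * phb x y > 0}\<^sup>*"
    using Suc.IH[OF qz mz Suc.prems(3)] .
  ultimately show ?case by (rule converse_rtrancl_into_rtrancl)
qed

theorem mainTheorem2:
  fixes P :: "'x::finite \<Rightarrow> 'x \<Rightarrow> real"
    and mu :: "'x \<Rightarrow> real"
    and nu :: "'w::polish_space measure"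
    and phi g :: "'x \<Rightarrow> 'x \<Rightarrow> 'w \<Rightarrow> real"
  assumes nu_prob: "prob_space nu"
    and nu_borel: "sets nu = sets borel"
    and P_nonneg: "\<forall>x y. P x y \<ge> 0"
    and P_stoch: "\<forall>x. (\<Sum>y\<in>UNIV. P x y) = 1"
    and pi_nonneg: "\<forall>x. mu x \<ge> 0"
    and pi_sum: "(\<Sum>x\<in>UNIV. mu x) = 1"
    and pi_stat: "\<forall>y. (\<Sum>x\<in>UNIV. mu x * P x y) = mu y"
    and phi_nonneg: "\<forall>x y \<eta>. phi x y \<eta> \<ge> 0"
    and g_nonneg: "\<forall>x y \<eta>. g x y \<eta> \<ge> 0"
    and phi_meas: "\<forall>x y. phi x y \<in> borel_measurable nu"
    and g_meas: "\<forall>x y. g x y \<in> borel_measurable nu"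
    and a1: "A1 P mu phi g nu"
    and a2: "A2 P mu"
    and phibar_fin: "\<forall>x y. integrable nu (phi x y)"
    and ghat_fin: "\<forall>x y. P x y > 0 \<longrightarrow> integrable nu (\<lambda>\<eta>. phi x y \<eta> * g x y \<eta>)"
  shows "(\<forall>p\<ge>1. A3 mu p (Vop P phi nu) (ghat P phi g nu)) \<and>
    (\<exists>L::real. L_seq P mu phi nu \<longlonglongrightarrow> L \<and>
       (\<forall>p\<ge>1. Lp_seq P mu phi nu p \<longlonglongrightarrow> L) \<and>
       (\<forall>p\<ge>1.
          ((\<exists>h. Markov_sol mu p (Top P phi g nu) h) \<longleftrightarrow> L < 0) \<and>
          ((\<exists>h. Markov_sol mu p (Top P phi g nu) h \<and>
              (\<forall>h'. Markov_sol mu p (Top P phi g nu) h' \<longrightarrow> ae_eq mu h' h)) \<longleftrightarrow> L < 0) \<and>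
          ((\<exists>h h'. Hp_mem mu p h \<and> Hp_mem mu p h' \<and>
              Lp_tendsto mu p (\<lambda>n. (Top P phi g nu ^^ n) h) h') \<longleftrightarrow> L < 0) \<and>
          ((\<exists>hs. Markov_sol mu p (Top P phi g nu) hs \<and>
              (\<forall>h'. Markov_sol mu p (Top P phi g nu) h' \<longrightarrow> ae_eq mu h' hs) \<and>
              (\<forall>h. Hp_mem mu p h \<longrightarrow> Lp_tendsto mu p (\<lambda>n. (Top P phi g nu ^^ n) h) hs)) \<longleftrightarrow> L < 0)))"
proof -
  interpret nu: prob_space nu by (rule nu_prob)
  define M where "M x y = P x y * phibar phi nu x y" for x y
  define b where "b = ghat P phi g nu"
  have phib_pos: "phibar phi nu x y > 0" for x y
    unfolding phibar_def
  proof (rule pos_integral[OF nu_prob])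
    show "integrable nu (phi x y)" using phibar_fin by blast
    show "\<And>e. phi x y e \<ge> 0" using phi_nonneg by blast
    show "\<not> (AE e in nu. phi x y e = 0)"
    proof
      assume "AE e in nu. phi x y e = 0"
      moreover have pos: "\<forall>e. phi x y e > 0" using a1 by (simp add: A1_def)
      ultimately have "AE e in nu. False"
        by (elim AE_mp, intro AE_I2) (metis pos less_irrefl)
      then show False by simp
    qed
  qed
  have M0: "M x y \<ge> 0" for x y unfolding M_def using P_nonneg phib_pos[of x y] by simp
  have b0: "b x \<ge> 0" for x
    unfolding b_def ghat_def
    by (intro sum_nonneg mult_nonneg_nonneg integral_nonneg) (use P_nonneg phi_nonneg g_nonneg in auto)
  have mu_term: "mu x * P x y \<le> mu y" for x y
  proof -
    have "mu x * P x y \<le> (\<Sum>z\<in>UNIV. mu z * P z y)"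
      by (rule member_le_sum) (use pi_nonneg P_nonneg in auto)
    then show ?thesis using pi_stat by simp
  qed
  have clP: "mu y > 0" if "mu x > 0" "P x y > 0" for x y
    using mu_term[of x y] that by (smt (verit) mult_pos_pos)
  have MposP: "M x y > 0 \<longleftrightarrow> P x y > 0" for x y
    unfolding M_def using phib_pos[of x y] P_nonneg by (simp add: zero_less_mult_iff)
  have fs: "finsys M b mu"
  proof
    show "\<And>x y. M x y \<ge> 0" by (rule M0)
    show "\<And>x. b x \<ge> 0" by (rule b0)
    show "\<And>x. mu x \<ge> 0" using pi_nonneg by blast
    show "sum mu UNIV = 1" by (rule pi_sum)
    show "\<exists>x. mu x > 0" using sum_pos_ex[OF finite, of mu UNIV] pi_sum by auto
    show "\<And>x y. mu x > 0 \<Longrightarrow> M x y > 0 \<Longrightarrow> mu y > 0" using clP MposP by blast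
    show "\<exists>x. mu x > 0 \<and> M x y > 0" if "mu y > 0" for y
    proof -
      have "(\<Sum>x\<in>UNIV. mu x * P x y) > 0" using pi_stat that by simp
      then obtain x where "mu x * P x y > 0" using sum_pos_ex[OF finite] by blast
      then have "mu x > 0" "P x y > 0" using pi_nonneg[rule_format, of x] P_nonneg[rule_format, of x y] by (auto simp: zero_less_mult_iff)
      then show ?thesis using MposP by blast
    qed
    show "\<exists>y. mu y > 0 \<and> M x y > 0" if "mu x > 0" for x
    proof -
      have "(\<Sum>y\<in>UNIV. P x y) > 0" using P_stoch by simp
      then obtain y where "P x y > 0" using sum_pos_ex[OF finite] by blast
      then show ?thesis using clP[OF that] MposP by blast
    qed
    show "(x, y) \<in> {(x,y). mu x > 0 \<and> mu y > 0 \<and> M x y > 0}\<^sup>*" if "mu x > 0" "mu y > 0" for x y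
    proof -
      have "(\<Sum>z\<in>{y}. mu z) > 0" using that by simp
      then obtain n where "(\<Sum>z\<in>{y}. Ppow P n x z) > 0" using a2 unfolding A2_def by blast
      then have "Ppow P n x y > 0" by simp
      note r = Ppow_reach[where phb="phibar phi nu" and mu=mu and P=P, OF P_nonneg phib_pos clP this that]
      show ?thesis unfolding M_def by (rule r)
    qed
    show "\<exists>x. mu x > 0 \<and> b x > 0"
    proof -
      have "(\<Sum>x\<in>UNIV. \<Sum>y\<in>UNIV. mu x * P x y * measure nu {\<eta> \<in> space nu. g x y \<eta> > 0}) > 0"
        using a1 by (simp add: A1_def)
      then obtain x where "(\<Sum>y\<in>UNIV. mu x * P x y * measure nu {\<eta> \<in> space nu. g x y \<eta> > 0}) > 0"
        using sum_pos_ex[OF finite] by blast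
      then obtain y where xy: "mu x * P x y * measure nu {\<eta> \<in> space nu. g x y \<eta> > 0} > 0"
        using sum_pos_ex[OF finite] by blast
      have mx: "mu x > 0" and pxy: "P x y > 0" and mg: "measure nu {\<eta> \<in> space nu. g x y \<eta> > 0} > 0"
        using xy pi_nonneg[rule_format, of x] P_nonneg[rule_format, of x y] measure_nonneg[of nu "{\<eta> \<in> space nu. g x y \<eta> > 0}"]
        by (auto simp: zero_less_mult_iff)
      have ipos: "(\<integral>\<eta>. phi x y \<eta> * g x y \<eta> \<partial>nu) > 0"
      proof (rule pos_integral[OF nu_prob])
        show "integrable nu (\<lambda>\<eta>. phi x y \<eta> * g x y \<eta>)" using ghat_fin pxy by blast
        show "\<And>e. phi x y e * g x y e \<ge> 0" using phi_nonneg g_nonneg by simp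
        show "\<not> (AE e in nu. phi x y e * g x y e = 0)"
        proof
          assume "AE e in nu. phi x y e * g x y e = 0"
          moreover have pos: "\<forall>e. phi x y e > 0" using a1 by (simp add: A1_def)
          ultimately have ae: "AE e in nu. \<not> g x y e > 0"
            by (elim AE_mp, intro AE_I2 impI) (metis pos mult_eq_0_iff order_less_irrefl)
          have gm: "g x y \<in> borel_measurable nu" using g_meas by blast
          have "emeasure nu {\<eta> \<in> space nu. g x y \<eta> > 0} = 0"
            using ae by (subst (asm) AE_iff_measurable[OF _ refl]) (use gm in measurable)
          then have "measure nu {\<eta> \<in> space nu. g x y \<eta> > 0} = 0" by (simp add: measure_def)
          then show False using mg by simp
        qed
      qed
      have "0 < (\<integral>\<eta>. phi x y \<eta> * g x y \<eta> \<partial>nu) * P x y" using ipos pxy by simp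
      also have "\<dots> \<le> b x" unfolding b_def ghat_def
        by (rule member_le_sum) (use P_nonneg phi_nonneg g_nonneg in \<open>auto intro!: mult_nonneg_nonneg integral_nonneg\<close>)
      finally show ?thesis using mx by blast
    qed
  qed
  interpret finsys M b mu by (rule fs)
  have Vop_eq: "Vop P phi nu = Mv" by (auto simp: fun_eq_iff Vop_def Mv_def M_def mult_ac)
  have Top_eq: "Top P phi g nu = T" by (auto simp: fun_eq_iff Top_def T_def Vop_eq b_def[symmetric])
  have Ex_eq: "Ex_prod P phi nu x n = (Mv^^n) (\<lambda>_. 1) x" for x n
  proof -
    have "(\<lambda>h z. \<Sum>y\<in>UNIV. (P z y * phibar phi nu z y) * h y) = Mv"
      by (auto simp: fun_eq_iff Mv_def M_def)
    then show ?thesis using Ex_prod_eq[OF nu_prob phibar_fin, of P x n] by simp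
  qed
  have Lseq: "L_seq P mu phi nu = (\<lambda>n. 1 / real n * ln (\<Sum>x\<in>UNIV. mu x * (Mv^^n) (\<lambda>_. 1) x))"
    by (simp add: fun_eq_iff L_seq_def Ex_eq)
  have Lpseq: "Lp_seq P mu phi nu p = (\<lambda>n. (1 / (real n * p)) * ln (\<Sum>x\<in>UNIV. mu x * ((Mv^^n) (\<lambda>_. 1) x) powr p))" for p
    by (simp add: fun_eq_iff Lp_seq_def Ex_eq piM_integral pi_nonneg)
  show ?thesis
  proof (intro conjI allI impI exI[of _ "ln rr"])
    fix p :: real assume p: "p \<ge> 1"
    show "A3 mu p (Vop P phi nu) (ghat P phi g nu)"
      using loc_main[OF p] by (simp add: Vop_eq b_def)
  next
    show "L_seq P mu phi nu \<longlonglongrightarrow> ln rr" unfolding Lseq by (rule L_lim)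
  next
    fix p :: real assume p: "p \<ge> 1"
    show "Lp_seq P mu phi nu p \<longlonglongrightarrow> ln rr" unfolding Lpseq by (rule Lp_lim) (use p in simp)
  next
    fix p :: real assume p: "p \<ge> 1"
    note lm = loc_main[OF p, folded Top_eq]
    show "(\<exists>h. Markov_sol mu p (Top P phi g nu) h) \<longleftrightarrow> ln rr < 0" using lm by blast
    show "(\<exists>h. Markov_sol mu p (Top P phi g nu) h \<and>
              (\<forall>h'. Markov_sol mu p (Top P phi g nu) h' \<longrightarrow> ae_eq mu h' h)) \<longleftrightarrow> ln rr < 0" using lm by blast
    show "(\<exists>h h'. Hp_mem mu p h \<and> Hp_mem mu p h' \<and>
              Lp_tendsto mu p (\<lambda>n. (Top P phi g nu ^^ n) h) h') \<longleftrightarrow> ln rr < 0" using lm by blast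
    show "(\<exists>hs. Markov_sol mu p (Top P phi g nu) hs \<and>
              (\<forall>h'. Markov_sol mu p (Top P phi g nu) h' \<longrightarrow> ae_eq mu h' hs) \<and>
              (\<forall>h. Hp_mem mu p h \<longrightarrow> Lp_tendsto mu p (\<lambda>n. (Top P phi g nu ^^ n) h) hs)) \<longleftrightarrow> ln rr < 0"
      using lm by blast
  qed
qed


end
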